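(* The gluing invariant $\mathbf{G}$ is a well-defined invariant of virtual knots, it is a Vassiliev invariant of degree one, and it is the universal Vassiliev invariant of degree one for virtual knots: for every abelian group $A$, every Vassiliev invariant $V$ of degree one of virtual knots with values in $A$, and all homotopic virtual knots $K$ and $K_0$, the difference $\mathbf{G}(K)-\mathbf{G}(K_0)$ lies in $2\,\mathbf{Z}[\mathcal{H}^1]$ and $$V(K)=V(K_0)+V^{\ast}\Big(\tfrac12\big(\mathbf{G}(K)-\mathbf{G}(K_0)\big)\Big).$$
   Context: A virtual knot diagram is an oriented closed curve immersed in the plane with finitely many transverse double points, each a classical crossing (with over/under data) or a virtual crossing (encircled). Virtual knots are equivalence classes of diagrams under the classical Reidemeister moves and the virtual Reidemeister moves (V1, V2, V3 involving only virtual crossings, and the mixed move passing a strand with only virtual crossings across a classical crossing). Singular virtual knots additionally have finitely many double-points (singular crossings), with equivalence generated by these moves and the standard moves involving double-points (passing a strand over/under a double-point, passing a virtual strand across a double-point, and rotating a double-point so that an adjacent classical crossing moves from one side to the other). Two (singular) virtual knots are homotopic if related by these moves together with crossing changes at classical crossings; flat singular virtual knots (classical crossings without over/under data, up to the flat versions of all moves) correspond exactly to homotopy classes of singular virtual knots. Let $\mathcal{H}^1$ be the set of homotopy classes (equivalently flat classes) of singular virtual knots with exactly one double-point, and $\mathbf{Z}[\mathcal{H}^1]$ the free abelian group on it. The sign $\operatorname{sign}(d)$ of a classical crossing is $+1$ if (over-strand direction, under-strand direction) is positively oriented, $-1$ otherwise. For a virtual knot $K$ with diagram $\widetilde K$ and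 a classical crossing $d$, $[\widetilde K^d_{glue}]\in\mathcal{H}^1$ is the flat class of the shadow of the singular virtual knot obtained by replacing $d$ by a double-point; $[\widetilde K^0_{sing}]\in\mathcal{H}^1$ is the flat class obtained by adding a small kink to $\widetilde K$ by a Reidemeister 1 move and replacing the kink crossing by a double-point. Define $\mathbf{G}(K)=\sum_d\operatorname{sign}(d)([\widetilde K^d_{glue}]-[\widetilde K^0_{sing}])\in\mathbf{Z}[\mathcal{H}^1]$, summed over classical crossings of $\widetilde K$. Vassiliev invariants: an invariant $V$ of virtual knots with values in $A$ extends to singular virtual knots by $V(K)=V(K^+)-V(K^-)$, where $K^\pm$ is obtained by resolving a chosen double-point into a positive/negative classical crossing (independent of the order of resolution). $V$ is Vassiliev of degree $\le n$ if it vanishes on singular virtual knots with more than $n$ double-points; the degree is the least such $n$. For $V$ of degree one, its value $V^{(1)}$ on singular virtual knots with one double-point is constant on homotopy classes, and $V^\ast:\mathbf{Z}[\mathcal{H}^1]\to A$ is the homomorphism with $V^\ast([K_\bullet])=V^{(1)}(K_\bullet)$ for each singular virtual knot $K_\bullet$ with one double-point. In the displayed formula, $\tfrac12 x$ for $x\in 2\mathbf{Z}[\mathcal{H}^1]$ denotes the unique $y\in\mathbf{Z}[\mathcal{H}^1]$ with $2y=x$. *)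

theory Defs
  imports Main "HOL-Library.Function_Algebras"
begin

text \<open>Combinatorial model: (singular) virtual knot diagrams as Gauss diagrams.
A diagram is a word of chord endpoints (chord name, is_tail) read along the knot,
together with a kind for each chord.  Each chord carries its flat arrow:
the tail is the branch x such that (direction of x, direction of the other branch)
is positively oriented.  A classical chord  Cl ov  records ov = (the tail branch is
the over-strand); hence its sign is +1 iff ov.  Sg marks a double point.\<close>

datatype ckind = Cl bool | Sg

type_synonym letter = "nat \<times> bool"
type_synonym gd = "letter list \<times> (nat \<Rightarrow> ckind)"

definition chords :: "letter list \<Rightarrow> nat set" where
  "chords w = fst ` set w"

definition wf_gd :: "gd \<Rightarrow> bool" where
  "wf_gd d \<longleftrightarrow> distinct (fst d) \<and> (\<forall>c b. (c, b) \<in> set (fst d) \<longrightarrow> (c, \<not> b) \<in> set (fst d))"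

definition flipl :: "letter \<Rightarrow> letter" where
  "flipl l = (fst l, \<not> snd l)"

text \<open>Over/under (and singular) conditions for a Reidemeister-3 type triangle.
Strands 1,2,3; chord a between 1,2, b between 1,3, c between 2,3; s12 = tail of a on
strand 1, s23 = tail of c on strand 2, s31 = tail of b on strand 3.\<close>
fun r3_kinds :: "ckind \<Rightarrow> ckind \<Rightarrow> ckind \<Rightarrow> bool \<Rightarrow> bool \<Rightarrow> bool \<Rightarrow> bool" where
  "r3_kinds (Cl oa) (Cl ob) (Cl oc) s12 s23 s31 =
     (\<not> ((s12 = oa) = (s23 = oc) \<and> (s23 = oc) = (s31 = ob)))"
| "r3_kinds Sg (Cl ob) (Cl oc) s12 s23 s31 = ((s31 = ob) = (\<not> (s23 = oc)))"
| "r3_kinds (Cl oa) Sg (Cl oc) s12 s23 s31 = ((\<not> (s12 = oa)) = (s23 = oc))"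
| "r3_kinds (Cl oa) (Cl ob) Sg s12 s23 s31 = ((s12 = oa) = (\<not> (s31 = ob)))"
| "r3_kinds _ _ _ _ _ _ = False"

definition r3_ok :: "(nat \<Rightarrow> ckind) \<Rightarrow> letter list \<Rightarrow> letter list \<Rightarrow> letter list \<Rightarrow> bool" where
  "r3_ok k X Y Z \<longleftrightarrow> (\<exists>a b c s12 s23 s31 o1 o2 o3. distinct [a, b, c] \<and>
     X = (if o1 then [(a, s12), (b, \<not> s31)] else [(b, \<not> s31), (a, s12)]) \<and>
     Y = (if o2 then [(a, \<not> s12), (c, s23)] else [(c, s23), (a, \<not> s12)]) \<and>
     Z = (if o3 then [(b, s31), (c, \<not> s23)] else [(c, \<not> s23), (b, s31)]) \<and>
     ((o1 = o3) = (s12 = s23)) \<and> ((o2 = o3) = (s31 \<noteq> s12)) \<and>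
     r3_kinds (k a) (k b) (k c) s12 s23 s31)"

text \<open>Rotation of a double point d across an adjacent classical crossing c.\<close>
definition rot_ok :: "(nat \<Rightarrow> ckind) \<Rightarrow> letter list \<Rightarrow> letter list \<Rightarrow> bool" where
  "rot_ok k X Y \<longleftrightarrow> (\<exists>c d e oc. c \<noteq> d \<and> k c = Cl oc \<and> k d = Sg \<and>
     X \<in> {[(c, e), (d, \<not> e)], [(d, \<not> e), (c, e)]} \<and>
     Y \<in> {[(c, \<not> e), (d, e)], [(d, e), (c, \<not> e)]})"

inductive sv_step :: "gd \<Rightarrow> gd \<Rightarrow> bool" where
  rot: "sv_step (u @ v, k) (v @ u, k)"
| ren: "inj_on f (chords w) \<Longrightarrow> (\<forall>c\<in>chords w. k' (f c) = k c) \<Longrightarrow>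
        sv_step (w, k) (map (\<lambda>(c, b). (f c, b)) w, k')"
| r1: "c \<notin> chords (u @ v) \<Longrightarrow>
        sv_step (u @ v, k) (u @ [(c, b), (c, \<not> b)] @ v, k(c := Cl ov))"
| r2: "c \<notin> chords (u @ v @ w) \<Longrightarrow> d \<notin> chords (u @ v @ w) \<Longrightarrow> c \<noteq> d \<Longrightarrow>
        X \<in> {[(c, \<not> b), (d, b)], [(d, b), (c, \<not> b)]} \<Longrightarrow>
        sv_step (u @ v @ w, k)
          (u @ [(c, b), (d, \<not> b)] @ v @ X @ w, k(c := Cl ov, d := Cl (\<not> ov)))"
| r3: "r3_ok k X Y Z \<Longrightarrow>
        sv_step (A @ X @ B @ Y @ C @ Z @ D, k) (A @ rev X @ B @ rev Y @ C @ rev Z @ D, k)"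
| rotv: "rot_ok k X Y \<Longrightarrow>
        sv_step (A @ X @ B @ Y @ C, k)
          (A @ rev (map flipl X) @ B @ rev (map flipl Y) @ C, k)"

inductive cc_step :: "gd \<Rightarrow> gd \<Rightarrow> bool" where
  cc: "c \<in> chords w \<Longrightarrow> k c = Cl ov \<Longrightarrow> cc_step (w, k) (w, k(c := Cl (\<not> ov)))"

definition veq :: "gd \<Rightarrow> gd \<Rightarrow> bool" where
  "veq = equivclp (\<lambda>x y. wf_gd x \<and> wf_gd y \<and> sv_step x y)"

definition homot :: "gd \<Rightarrow> gd \<Rightarrow> bool" where
  "homot = equivclp (\<lambda>x y. wf_gd x \<and> wf_gd y \<and> (sv_step x y \<or> cc_step x y))"

definition sing_chords :: "gd \<Rightarrow> nat set" where
  "sing_chords d = {c \<in> chords (fst d). snd d c = Sg}"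

definition nsing :: "gd \<Rightarrow> nat" where
  "nsing d = card (sing_chords d)"

definition is_vdiag :: "gd \<Rightarrow> bool" where
  "is_vdiag d \<longleftrightarrow> wf_gd d \<and> sing_chords d = {}"

definition vinvariant :: "(gd \<Rightarrow> 'a) \<Rightarrow> bool" where
  "vinvariant V \<longleftrightarrow> (\<forall>d d'. is_vdiag d \<and> is_vdiag d' \<and> veq d d' \<longrightarrow> V d = V d')"

text \<open>Extension to singular diagrams: V(K) = V(K+) - V(K-) at each double point.
Resolving a double point into a positive (negative) crossing keeps its flat arrow and
makes the tail branch over (under).\<close>
definition Vext :: "(gd \<Rightarrow> 'a::ab_group_add) \<Rightarrow> gd \<Rightarrow> 'a" where
  "Vext V d = (\<Sum>S\<in>Pow (sing_chords d).
     (if even (card S) then id else uminus)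
       (V (fst d, \<lambda>c. if c \<in> S then Cl False else if c \<in> sing_chords d then Cl True else snd d c)))"

definition vass_le :: "(gd \<Rightarrow> 'a::ab_group_add) \<Rightarrow> nat \<Rightarrow> bool" where
  "vass_le V n \<longleftrightarrow> (\<forall>d. wf_gd d \<and> nsing d > n \<longrightarrow> Vext V d = 0)"

definition vass_deg :: "(gd \<Rightarrow> 'a::ab_group_add) \<Rightarrow> nat \<Rightarrow> bool" where
  "vass_deg V n \<longleftrightarrow> vass_le V n \<and> (\<forall>m<n. \<not> vass_le V m)"

text \<open>Homotopy classes; H^1; elements of Z[H^1] are finitely supported gd set => int.\<close>
definition hclass :: "gd \<Rightarrow> gd set" where
  "hclass d = {d'. homot d d'}"

definition H1 :: "gd set set" where
  "H1 = {hclass d | d. wf_gd d \<and> nsing d = 1}"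

fun sgn_ck :: "ckind \<Rightarrow> int" where
  "sgn_ck (Cl ov) = (if ov then 1 else -1)"
| "sgn_ck Sg = 0"

definition fresh :: "letter list \<Rightarrow> nat" where
  "fresh w = Suc (Max (insert 0 (chords w)))"

definition glue :: "gd \<Rightarrow> nat \<Rightarrow> gd" where
  "glue d c = (fst d, (snd d)(c := Sg))"

definition sing0 :: "gd \<Rightarrow> gd" where
  "sing0 d = ((fresh (fst d), True) # (fresh (fst d), False) # fst d, (snd d)(fresh (fst d) := Sg))"

definition Gl :: "gd \<Rightarrow> gd set \<Rightarrow> int" where
  "Gl d = (\<lambda>h. \<Sum>c\<in>{c \<in> chords (fst d). snd d c \<noteq> Sg}.
     sgn_ck (snd d c) * ((if h = hclass (glue d c) then 1 else 0) - (if h = hclass (sing0 d) then 1 else 0)))"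

definition zsmul :: "int \<Rightarrow> 'a::ab_group_add \<Rightarrow> 'a" where
  "zsmul n x = (if 0 \<le> n then (\<Sum>i<nat n. x) else - (\<Sum>i<nat (- n). x))"

text \<open>V^*: the homomorphism Z[H^1] -> A sending a class to the value of V on any representative.\<close>
definition Vstar :: "(gd \<Rightarrow> 'a::ab_group_add) \<Rightarrow> (gd set \<Rightarrow> int) \<Rightarrow> 'a" where
  "Vstar V z = (\<Sum>h\<in>{h. z h \<noteq> 0}. zsmul (z h) (Vext V (SOME d. d \<in> h)))"

end

theory Submission
  imports Defs "HOL-Library.Multiset"
begin

definition wfw :: "letter list \<Rightarrow> bool" where
  "wfw w \<longleftrightarrow> distinct w \<and> (\<forall>c b. (c, b) \<in> set w \<longrightarrow> (c, \<not> b) \<in> set w)"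

lemma wf_gd_wfw[simp]: "wf_gd (w, k) = wfw w"
  by (simp add: wf_gd_def wfw_def)

abbreviation R :: "gd \<Rightarrow> gd \<Rightarrow> bool" where
  "R x y \<equiv> wf_gd x \<and> wf_gd y \<and> (sv_step x y \<or> cc_step x y)"

lemma homot_refl[intro]: "homot x x" by (simp add: homot_def)
lemma homot_sym: "homot x y \<Longrightarrow> homot y x"
  unfolding homot_def by (rule equivclp_sym)
lemma homot_trans[trans]: "homot x y \<Longrightarrow> homot y z \<Longrightarrow> homot x z"
  unfolding homot_def by (rule equivclp_trans)

lemma homot_sv: "wfw w \<Longrightarrow> wfw w' \<Longrightarrow> sv_step (w,k) (w',k') \<Longrightarrow> homot (w,k) (w',k')"
  unfolding homot_def by (rule r_into_equivclp) simp
lemma homot_sv': "wfw w \<Longrightarrow> wfw w' \<Longrightarrow> sv_step (w',k') (w,k) \<Longrightarrow> homot (w,k) (w',k')"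
  using homot_sv homot_sym by blast
lemma homot_cc: "wfw w \<Longrightarrow> c \<in> chords w \<Longrightarrow> k c = Cl ov \<Longrightarrow> homot (w,k) (w,k(c := Cl ov'))"
proof (cases "ov' = ov")
  case True
  assume "k c = Cl ov"
  then have "k(c := Cl ov') = k" using True by auto
  then show ?thesis by auto
next
  case False
  assume a: "wfw w" "c \<in> chords w" "k c = Cl ov"
  then have "cc_step (w,k) (w, k(c := Cl (\<not> ov)))" by (intro cc_step.cc)
  moreover have "\<not> ov = ov'" using False by auto
  ultimately show ?thesis unfolding homot_def using a by (intro r_into_equivclp) simp
qed

lemma veq_homot: "veq x y \<Longrightarrow> homot x y"
proof -
  have m: "symclp (\<lambda>x y. wf_gd x \<and> wf_gd y \<and> sv_step x y) \<le> symclp (\<lambda>x y. wf_gd x \<and> wf_gd y \<and> (sv_step x y \<or> cc_step x y))"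
    by (auto simp: symclp_def)
  assume "veq x y"
  then show ?thesis unfolding veq_def homot_def equivclp_def
    using rtranclp_mono[OF m] by blast
qed

lemma veq_sv: "wfw w \<Longrightarrow> wfw w' \<Longrightarrow> sv_step (w,k) (w',k') \<Longrightarrow> veq (w,k) (w',k')"
  unfolding veq_def by (rule r_into_equivclp) simp
lemma veq_sym: "veq x y \<Longrightarrow> veq y x"
  unfolding veq_def by (rule equivclp_sym)
lemma veq_trans[trans]: "veq x y \<Longrightarrow> veq y z \<Longrightarrow> veq x z"
  unfolding veq_def by (rule equivclp_trans)
lemma veq_refl[intro]: "veq x x" by (simp add: veq_def)

lemma chords_append[simp]: "chords (u @ v) = chords u \<union> chords v"
  by (auto simp: chords_def)
lemma chords_Cons[simp]: "chords (x # v) = insert (fst x) (chords v)"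
  by (auto simp: chords_def)
lemma chords_Nil[simp]: "chords [] = {}"
  by (auto simp: chords_def)
lemma chords_rev[simp]: "chords (rev u) = chords u"
  by (auto simp: chords_def)
lemma finite_chords[simp]: "finite (chords w)"
  by (simp add: chords_def)

lemma fresh_gt: "c \<in> chords w \<Longrightarrow> c < fresh w"
  unfolding fresh_def by (simp add: le_imp_less_Suc)
lemma fresh_notin: "fresh w \<notin> chords w"
  using fresh_gt by blast
lemma fresh_notin2: "Suc (fresh w) \<notin> chords w"
  using fresh_gt by (metis Suc_lessD less_irrefl_nat)

lemma in_chords: "(c, b) \<in> set w \<Longrightarrow> c \<in> chords w"
  by (force simp: chords_def)

lemma chords_iff: "c \<in> chords w \<longleftrightarrow> (c,True) \<in> set w \<or> (c,False) \<in> set w"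
proof
  assume "c \<in> chords w"
  then obtain b where "(c,b) \<in> set w" unfolding chords_def by force
  then show "(c,True) \<in> set w \<or> (c,False) \<in> set w" by (cases b) auto
qed (auto intro: in_chords)

lemma mset_wfw: "wfw w \<Longrightarrow> mset w' = mset w \<Longrightarrow> wfw w'"
  unfolding wfw_def by (metis mset_eq_setD mset_eq_imp_distinct_iff)

lemma wfw_rot: "wfw (u @ v) = wfw (v @ u)"
  unfolding wfw_def by auto

lemma homot_rot: "wfw (u @ v) \<Longrightarrow> homot (u @ v, k) (v @ u, k)"
  by (rule homot_sv) (auto simp: wfw_rot intro: sv_step.rot)

lemma notin_both: "(c,b) \<notin> S \<Longrightarrow> (c,\<not>b) \<notin> S \<Longrightarrow> (c,b') \<notin> S"
  by (cases b; cases b') auto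

lemma slide_case1:
  assumes wf: "wfw ([(x,\<beta>),(s,p),(s,\<not>p)] @ M1 @ [(x,\<not>\<beta>)] @ M2)"
    and ks: "k s = Sg" and kx: "k x = Cl ox" and bp: "\<beta> = (\<not> p)"
  shows "homot ([(x,\<beta>),(s,p),(s,\<not>p)] @ M1 @ [(x,\<not>\<beta>)] @ M2, k)
               ([(s,p),(s,\<not>p),(x,\<beta>)] @ M1 @ [(x,\<not>\<beta>)] @ M2, k)"
proof -
  define W0 where "W0 = [(x,\<beta>),(s,p),(s,\<not>p)] @ M1 @ [(x,\<not>\<beta>)] @ M2"
  define ca where "ca = fresh W0"
  define cb where "cb = Suc (fresh W0)"
  have ca: "ca \<notin> chords W0" and cb: "cb \<notin> chords W0" and cab: "ca \<noteq> cb"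
    using fresh_notin fresh_notin2 unfolding ca_def cb_def by auto
  have d0: "distinct W0" using wf unfolding W0_def wfw_def by blast
  have fl0: "\<And>c b. (c,b) \<in> set W0 \<Longrightarrow> (c, \<not>b) \<in> set W0" using wf unfolding W0_def wfw_def by blast
  have xs: "x \<noteq> s" using d0 unfolding W0_def by auto
  have xM: "\<forall>b. (x,b) \<notin> set M1 \<and> (x,b) \<notin> set M2" "\<forall>b. (s,b) \<notin> set M1 \<and> (s,b) \<notin> set M2"
  proof -
    have "(x,\<beta>) \<notin> set M1" "(x,\<not>\<beta>) \<notin> set M1" "(x,\<beta>) \<notin> set M2" "(x,\<not>\<beta>) \<notin> set M2"
      "(s,p) \<notin> set M1" "(s,\<not>p) \<notin> set M1" "(s,p) \<notin> set M2" "(s,\<not>p) \<notin> set M2"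
      using d0 unfolding W0_def by simp_all
    then show "\<forall>b. (x,b) \<notin> set M1 \<and> (x,b) \<notin> set M2" "\<forall>b. (s,b) \<notin> set M1 \<and> (s,b) \<notin> set M2"
      by (metis notin_both)+
  qed
  have xC: "x \<notin> chords M1" "x \<notin> chords M2" "s \<notin> chords M1" "s \<notin> chords M2"
    using xM by (auto simp: chords_iff)
  define k1 where "k1 = k(ca := Cl (\<not> ox), cb := Cl (\<not> \<not> ox))"
  define W1 where "W1 = [(x,\<beta>),(s,p),(ca,p),(cb,\<not>p),(s,\<not>p)] @ M1 @ [(x,\<not>\<beta>),(cb,p),(ca,\<not>p)] @ M2"
  have caW: "ca \<notin> chords M1" "ca \<notin> chords M2" "ca \<noteq> x" "ca \<noteq> s"
    using ca unfolding W0_def by auto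
  have cbW: "cb \<notin> chords M1" "cb \<notin> chords M2" "cb \<noteq> x" "cb \<noteq> s"
    using cb unfolding W0_def by auto
  have wf1: "wfw W1"
    unfolding wfw_def W1_def
  proof (intro conjI allI impI)
    show "distinct ([(x,\<beta>),(s,p),(ca,p),(cb,\<not>p),(s,\<not>p)] @ M1 @ [(x,\<not>\<beta>),(cb,p),(ca,\<not>p)] @ M2)"
      using d0 caW cbW cab xs unfolding W0_def by (auto dest: in_chords)
  next
    fix c b assume "(c, b) \<in> set ([(x,\<beta>),(s,p),(ca,p),(cb,\<not>p),(s,\<not>p)] @ M1 @ [(x,\<not>\<beta>),(cb,p),(ca,\<not>p)] @ M2)"
    then show "(c, \<not>b) \<in> set ([(x,\<beta>),(s,p),(ca,p),(cb,\<not>p),(s,\<not>p)] @ M1 @ [(x,\<not>\<beta>),(cb,p),(ca,\<not>p)] @ M2)"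
      using fl0[of c b] unfolding W0_def by auto
  qed
  have s1: "sv_step (W0, k) (W1, k1)"
    using sv_step.r2[where c=ca and d=cb and u="[(x,\<beta>),(s,p)]" and v="[(s,\<not>p)] @ M1 @ [(x,\<not>\<beta>)]"
        and w=M2 and X="[(cb,p),(ca,\<not>p)]" and b=p and k=k and ov="\<not> ox"]
    using ca cb cab unfolding W0_def W1_def k1_def by (simp add: bp)
  define W2 where "W2 = [(s,p),(x,\<beta>),(ca,p),(s,\<not>p),(cb,\<not>p)] @ M1 @ [(cb,p),(x,\<not>\<beta>),(ca,\<not>p)] @ M2"
  have s2: "sv_step (W1, k1) (W2, k1)"
  proof -
    have "r3_ok k1 [(x,\<beta>),(s,p)] [(cb,\<not>p),(s,\<not>p)] [(x,\<not>\<beta>),(cb,p)]"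
      unfolding r3_ok_def
      apply (rule exI[of _ s], rule exI[of _ x], rule exI[of _ cb], rule exI[of _ p], rule exI[of _ "\<not>p"],
             rule exI[of _ "\<not>\<beta>"], rule exI[of _ False], rule exI[of _ False], rule exI[of _ True])
      using xs cbW caW ks kx cab unfolding k1_def by (auto simp: bp)
    from sv_step.r3[OF this, where A="[]" and B="[(ca,p)]" and C=M1 and D="[(ca,\<not>p)] @ M2"]
    show ?thesis unfolding W1_def W2_def by simp
  qed
  have wf2: "wfw W2"
    by (rule mset_wfw[OF wf1]) (simp add: W1_def W2_def)
  define W3 where "W3 = [(s,p),(s,\<not>p),(cb,\<not>p)] @ M1 @ [(cb,p)] @ M2"
  define k3 where "k3 = k(cb := Cl ox)"
  have wf3: "wfw W3"
    unfolding wfw_def W3_def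
  proof (intro conjI allI impI)
    show "distinct ([(s,p),(s,\<not>p),(cb,\<not>p)] @ M1 @ [(cb,p)] @ M2)"
      using d0 caW cbW cab xs unfolding W0_def by (auto dest: in_chords)
  next
    fix c b assume "(c, b) \<in> set ([(s,p),(s,\<not>p),(cb,\<not>p)] @ M1 @ [(cb,p)] @ M2)"
    then show "(c, \<not>b) \<in> set ([(s,p),(s,\<not>p),(cb,\<not>p)] @ M1 @ [(cb,p)] @ M2)"
      using fl0[of c b] xM unfolding W0_def by auto
  qed
  have s3: "sv_step (W3, k3) (W2, k1)"
  proof -
    have "k1 = k3(x := Cl ox, ca := Cl (\<not> ox))"
      unfolding k1_def k3_def using kx cab caW cbW by (auto simp: fun_eq_iff)
    moreover have "x \<notin> chords W3"
      using xM caW cbW cab xs unfolding W3_def by (auto simp: chords_iff)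
    moreover have "ca \<notin> chords W3"
      using caW cab unfolding W3_def by auto
    ultimately show ?thesis
    using sv_step.r2[where c=x and d=ca and u="[(s,p)]" and v="[(s,\<not>p),(cb,\<not>p)] @ M1 @ [(cb,p)]"
        and w=M2 and X="[(x,\<not>\<beta>),(ca,\<not>p)]" and b=\<beta> and k=k3 and ov="ox"] caW
    unfolding W3_def W2_def by (simp add: bp)
  qed
  define f :: "nat \<Rightarrow> nat" where "f = id(cb := x)"
  define W4 where "W4 = [(s,p),(s,\<not>p),(x,\<beta>)] @ M1 @ [(x,\<not>\<beta>)] @ M2"
  have s4: "sv_step (W3, k3) (W4, k)"
  proof -
    have "map (\<lambda>(c, b). (f c, b)) W3 = W4"
    proof -
      have "map (\<lambda>(c, b). (f c, b)) M1 = M1" "map (\<lambda>(c, b). (f c, b)) M2 = M2"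
        using cbW by (auto intro!: map_idI simp: f_def dest: in_chords)
      then show ?thesis unfolding W3_def W4_def using cbW xs by (simp add: f_def bp)
    qed
    moreover have "inj_on f (chords W3)"
      using xC caW cbW cab xs unfolding W3_def f_def inj_on_def by auto
    moreover have "\<forall>c\<in>chords W3. k (f c) = k3 c"
      using kx unfolding f_def k3_def by auto
    ultimately show ?thesis using sv_step.ren[of f W3 k k3] by simp
  qed
  have wf4: "wfw W4"
    by (rule mset_wfw[OF wf]) (simp add: W4_def)
  have "homot (W0,k) (W1,k1)" using homot_sv[OF _ wf1 s1] wf W0_def by simp
  also have "homot (W1,k1) (W2,k1)" using homot_sv[OF wf1 wf2 s2] .
  also have "homot (W2,k1) (W3,k3)" using homot_sv'[OF wf2 wf3 s3] .
  also have "homot (W3,k3) (W4,k)" using homot_sv[OF wf3 wf4 s4] .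
  finally show ?thesis unfolding W0_def W4_def .
qed

lemma slide_case2:
  assumes wf: "wfw ([(x,\<beta>),(s,p),(s,\<not>p)] @ M1 @ [(x,\<not>\<beta>)] @ M2)"
    and ks: "k s = Sg" and kx: "k x = Cl ox" and bp: "\<beta> = p"
  shows "homot ([(x,\<beta>),(s,p),(s,\<not>p)] @ M1 @ [(x,\<not>\<beta>)] @ M2, k)
               ([(s,p),(s,\<not>p),(x,\<beta>)] @ M1 @ [(x,\<not>\<beta>)] @ M2, k)"
proof -
  define W0 where "W0 = [(x,\<beta>),(s,p),(s,\<not>p)] @ M1 @ [(x,\<not>\<beta>)] @ M2"
  define ca where "ca = fresh W0"
  define cb where "cb = Suc (fresh W0)"
  have ca: "ca \<notin> chords W0" and cb: "cb \<notin> chords W0" and cab: "ca \<noteq> cb"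
    using fresh_notin fresh_notin2 unfolding ca_def cb_def by auto
  have d0: "distinct W0" using wf unfolding W0_def wfw_def by blast
  have fl0: "\<And>c b. (c,b) \<in> set W0 \<Longrightarrow> (c, \<not>b) \<in> set W0" using wf unfolding W0_def wfw_def by blast
  have xs: "x \<noteq> s" using d0 unfolding W0_def by auto
  have xM: "\<forall>b. (x,b) \<notin> set M1 \<and> (x,b) \<notin> set M2" "\<forall>b. (s,b) \<notin> set M1 \<and> (s,b) \<notin> set M2"
  proof -
    have "(x,\<beta>) \<notin> set M1" "(x,\<not>\<beta>) \<notin> set M1" "(x,\<beta>) \<notin> set M2" "(x,\<not>\<beta>) \<notin> set M2"
      "(s,p) \<notin> set M1" "(s,\<not>p) \<notin> set M1" "(s,p) \<notin> set M2" "(s,\<not>p) \<notin> set M2"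
      using d0 unfolding W0_def by simp_all
    then show "\<forall>b. (x,b) \<notin> set M1 \<and> (x,b) \<notin> set M2" "\<forall>b. (s,b) \<notin> set M1 \<and> (s,b) \<notin> set M2"
      by (metis notin_both)+
  qed
  have xC: "x \<notin> chords M1" "x \<notin> chords M2" "s \<notin> chords M1" "s \<notin> chords M2"
    using xM by (auto simp: chords_iff)
  define k1 where "k1 = k(ca := Cl (\<not> ox), cb := Cl (\<not> \<not> ox))"
  define W1 where "W1 = [(x,\<beta>),(s,p),(ca,\<not>p),(cb,p),(s,\<not>p)] @ M1 @ [(ca,p),(cb,\<not>p),(x,\<not>\<beta>)] @ M2"
  have caW: "ca \<notin> chords M1" "ca \<notin> chords M2" "ca \<noteq> x" "ca \<noteq> s"
    using ca unfolding W0_def by auto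
  have cbW: "cb \<notin> chords M1" "cb \<notin> chords M2" "cb \<noteq> x" "cb \<noteq> s"
    using cb unfolding W0_def by auto
  have wf1: "wfw W1"
    unfolding wfw_def W1_def
  proof (intro conjI allI impI)
    show "distinct ([(x,\<beta>),(s,p),(ca,\<not>p),(cb,p),(s,\<not>p)] @ M1 @ [(ca,p),(cb,\<not>p),(x,\<not>\<beta>)] @ M2)"
      using d0 caW cbW cab xs unfolding W0_def by (auto dest: in_chords)
  next
    fix c b assume "(c, b) \<in> set ([(x,\<beta>),(s,p),(ca,\<not>p),(cb,p),(s,\<not>p)] @ M1 @ [(ca,p),(cb,\<not>p),(x,\<not>\<beta>)] @ M2)"
    then show "(c, \<not>b) \<in> set ([(x,\<beta>),(s,p),(ca,\<not>p),(cb,p),(s,\<not>p)] @ M1 @ [(ca,p),(cb,\<not>p),(x,\<not>\<beta>)] @ M2)"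
      using fl0[of c b] unfolding W0_def by auto
  qed
  have s1: "sv_step (W0, k) (W1, k1)"
    using sv_step.r2[where c=ca and d=cb and u="[(x,\<beta>),(s,p)]" and v="[(s,\<not>p)] @ M1"
        and w="[(x,\<not>\<beta>)] @ M2" and X="[(ca,p),(cb,\<not>p)]" and b="\<not>p" and k=k and ov="\<not> ox"]
    using ca cb cab unfolding W0_def W1_def k1_def by (simp add: bp)
  define W2 where "W2 = [(s,p),(x,\<beta>),(ca,\<not>p),(s,\<not>p),(cb,p)] @ M1 @ [(ca,p),(x,\<not>\<beta>),(cb,\<not>p)] @ M2"
  have s2: "sv_step (W1, k1) (W2, k1)"
  proof -
    have "r3_ok k1 [(x,\<beta>),(s,p)] [(cb,p),(s,\<not>p)] [(cb,\<not>p),(x,\<not>\<beta>)]"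
      unfolding r3_ok_def
      apply (rule exI[of _ s], rule exI[of _ x], rule exI[of _ cb], rule exI[of _ p], rule exI[of _ p],
             rule exI[of _ "\<not>\<beta>"], rule exI[of _ False], rule exI[of _ False], rule exI[of _ False])
      using xs cbW caW ks kx cab unfolding k1_def by (auto simp: bp)
    from sv_step.r3[OF this, where A="[]" and B="[(ca,\<not>p)]" and C="M1 @ [(ca,p)]" and D="M2"]
    show ?thesis unfolding W1_def W2_def by simp
  qed
  have wf2: "wfw W2"
    by (rule mset_wfw[OF wf1]) (simp add: W1_def W2_def)
  define W3 where "W3 = [(s,p),(s,\<not>p),(cb,p)] @ M1 @ [(cb,\<not>p)] @ M2"
  define k3 where "k3 = k(cb := Cl ox)"
  have wf3: "wfw W3"
    unfolding wfw_def W3_def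
  proof (intro conjI allI impI)
    show "distinct ([(s,p),(s,\<not>p),(cb,p)] @ M1 @ [(cb,\<not>p)] @ M2)"
      using d0 caW cbW cab xs unfolding W0_def by (auto dest: in_chords)
  next
    fix c b assume "(c, b) \<in> set ([(s,p),(s,\<not>p),(cb,p)] @ M1 @ [(cb,\<not>p)] @ M2)"
    then show "(c, \<not>b) \<in> set ([(s,p),(s,\<not>p),(cb,p)] @ M1 @ [(cb,\<not>p)] @ M2)"
      using fl0[of c b] xM unfolding W0_def by auto
  qed
  have s3: "sv_step (W3, k3) (W2, k1)"
  proof -
    have "k1 = k3(x := Cl ox, ca := Cl (\<not> ox))"
      unfolding k1_def k3_def using kx cab caW cbW by (auto simp: fun_eq_iff)
    moreover have "x \<notin> chords W3"
      using xM caW cbW cab xs unfolding W3_def by (auto simp: chords_iff)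
    moreover have "ca \<notin> chords W3"
      using caW cab unfolding W3_def by auto
    ultimately show ?thesis
    using sv_step.r2[where c=x and d=ca and u="[(s,p)]" and v="[(s,\<not>p),(cb,p)] @ M1"
        and w="[(cb,\<not>p)] @ M2" and X="[(ca,p),(x,\<not>\<beta>)]" and b=\<beta> and k=k3 and ov="ox"] caW
    unfolding W3_def W2_def by (simp add: bp)
  qed
  define f :: "nat \<Rightarrow> nat" where "f = id(cb := x)"
  define W4 where "W4 = [(s,p),(s,\<not>p),(x,\<beta>)] @ M1 @ [(x,\<not>\<beta>)] @ M2"
  have s4: "sv_step (W3, k3) (W4, k)"
  proof -
    have "map (\<lambda>(c, b). (f c, b)) W3 = W4"
    proof -
      have "map (\<lambda>(c, b). (f c, b)) M1 = M1" "map (\<lambda>(c, b). (f c, b)) M2 = M2"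
        using cbW by (auto intro!: map_idI simp: f_def dest: in_chords)
      then show ?thesis unfolding W3_def W4_def using cbW xs by (simp add: f_def bp)
    qed
    moreover have "inj_on f (chords W3)"
      using xC caW cbW cab xs unfolding W3_def f_def inj_on_def by auto
    moreover have "\<forall>c\<in>chords W3. k (f c) = k3 c"
      using kx unfolding f_def k3_def by auto
    ultimately show ?thesis using sv_step.ren[of f W3 k k3] by simp
  qed
  have wf4: "wfw W4"
    by (rule mset_wfw[OF wf]) (simp add: W4_def)
  have "homot (W0,k) (W1,k1)" using homot_sv[OF _ wf1 s1] wf W0_def by simp
  also have "homot (W1,k1) (W2,k1)" using homot_sv[OF wf1 wf2 s2] .
  also have "homot (W2,k1) (W3,k3)" using homot_sv'[OF wf2 wf3 s3] .
  also have "homot (W3,k3) (W4,k)" using homot_sv[OF wf3 wf4 s4] .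
  finally show ?thesis unfolding W0_def W4_def .
qed


lemma slide:
  assumes wf: "wfw ([(x,\<beta>),(s,p),(s,\<not>p)] @ M1 @ [(x,\<not>\<beta>)] @ M2)"
    and ks: "k s = Sg" and kx: "k x = Cl ox"
  shows "homot ([(x,\<beta>),(s,p),(s,\<not>p)] @ M1 @ [(x,\<not>\<beta>)] @ M2, k)
               ([(s,p),(s,\<not>p),(x,\<beta>)] @ M1 @ [(x,\<not>\<beta>)] @ M2, k)"
  using slide_case1[OF assms] slide_case2[OF assms] by blast

lemma wfw_flip_in: "wfw w \<Longrightarrow> (c,b) \<in> set w \<Longrightarrow> (c,\<not>b) \<in> set w"
  unfolding wfw_def by blast

lemma slide_gen:
  assumes wf: "wfw (P @ [(x,\<beta>),(s,p),(s,\<not>p)] @ Q)"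
    and ks: "k s = Sg" and kx: "k x = Cl ox"
  shows "homot (P @ [(x,\<beta>),(s,p),(s,\<not>p)] @ Q, k) (P @ [(s,p),(s,\<not>p),(x,\<beta>)] @ Q, k)"
proof -
  have "(x,\<not>\<beta>) \<in> set (Q @ P)" using wfw_flip_in[OF wf, of x \<beta>] wf unfolding wfw_def by auto
  then obtain M1 M2 where QP: "Q @ P = M1 @ [(x,\<not>\<beta>)] @ M2"
    by (metis append_Cons append_Nil split_list)
  have wf1: "wfw ([(x,\<beta>),(s,p),(s,\<not>p)] @ M1 @ [(x,\<not>\<beta>)] @ M2)"
    using wf wfw_rot[of P] QP by (metis append.assoc)
  have "homot (P @ [(x,\<beta>),(s,p),(s,\<not>p)] @ Q, k) (([(x,\<beta>),(s,p),(s,\<not>p)] @ Q) @ P, k)"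
    by (rule homot_rot[of P "[(x,\<beta>),(s,p),(s,\<not>p)] @ Q"]) (use wf in simp)
  also have "... = ([(x,\<beta>),(s,p),(s,\<not>p)] @ M1 @ [(x,\<not>\<beta>)] @ M2, k)" using QP by simp
  also have "homot ... ([(s,p),(s,\<not>p),(x,\<beta>)] @ M1 @ [(x,\<not>\<beta>)] @ M2, k)"
    by (rule slide[OF wf1 ks kx])
  also have "... = (([(s,p),(s,\<not>p),(x,\<beta>)] @ Q) @ P, k)" using QP by simp
  also have "homot ... (P @ [(s,p),(s,\<not>p),(x,\<beta>)] @ Q, k)"
  proof -
    have "wfw (([(s,p),(s,\<not>p),(x,\<beta>)] @ Q) @ P)"
      by (rule mset_wfw[OF wf]) auto
    then show ?thesis using homot_rot by blast
  qed
  finally show ?thesis .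
qed

lemma slide_list:
  assumes wf: "wfw (P @ L @ [(s,p),(s,\<not>p)] @ Q)"
    and ks: "k s = Sg" and kL: "\<forall>l\<in>set L. \<exists>o'. k (fst l) = Cl o'"
  shows "homot (P @ L @ [(s,p),(s,\<not>p)] @ Q, k) (P @ [(s,p),(s,\<not>p)] @ L @ Q, k)"
  using wf kL
proof (induction L arbitrary: Q rule: rev_induct)
  case Nil
  then show ?case by auto
next
  case (snoc l L)
  obtain x \<beta> where l: "l = (x,\<beta>)" by (cases l)
  obtain ox where kx: "k x = Cl ox" using snoc.prems l by auto
  have "homot (P @ (L @ [l]) @ [(s,p),(s,\<not>p)] @ Q, k) ((P @ L) @ [(x,\<beta>),(s,p),(s,\<not>p)] @ Q, k)"
    unfolding l by (simp add: homot_refl)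
  also have "homot ... ((P @ L) @ [(s,p),(s,\<not>p),(x,\<beta>)] @ Q, k)"
    by (rule slide_gen[OF _ ks kx]) (use snoc.prems l in simp)
  also have "... = (P @ L @ [(s,p),(s,\<not>p)] @ ([l] @ Q), k)" using l by simp
  also have "homot ... (P @ [(s,p),(s,\<not>p)] @ L @ ([l] @ Q), k)"
  proof (rule snoc.IH)
    show "wfw (P @ L @ [(s, p), (s, \<not> p)] @ [l] @ Q)"
      by (rule mset_wfw[OF snoc.prems(1)]) auto
  qed (use snoc.prems in auto)
  finally show ?case by simp
qed

lemma kink_flip:
  assumes wf: "wfw (P @ [(s,p),(s,\<not>p)] @ Q)" and ks: "k s = Sg"
  shows "homot (P @ [(s,p),(s,\<not>p)] @ Q, k) (P @ [(s,\<not>p),(s,p)] @ Q, k)"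
proof -
  define W where "W = P @ [(s,p),(s,\<not>p)] @ Q"
  define c where "c = fresh W"
  have c: "c \<notin> chords W" unfolding c_def by (rule fresh_notin)
  have d0: "distinct W" using wf W_def wfw_def by blast
  have cs: "c \<noteq> s" using c W_def by auto
  define k1 where "k1 = k(c := Cl True)"
  define W1 where "W1 = P @ [(s,p),(c,\<not>p),(c,p),(s,\<not>p)] @ Q"
  have wf1: "wfw W1"
    unfolding wfw_def W1_def
  proof (intro conjI allI impI)
    show "distinct (P @ [(s,p),(c,\<not>p),(c,p),(s,\<not>p)] @ Q)"
    proof -
      have "\<forall>b. (c,b) \<notin> set P \<and> (c,b) \<notin> set Q" using c unfolding W_def by (auto dest: in_chords)
      then show ?thesis using d0 cs unfolding W_def by auto
    qed
    fix a b assume "(a, b) \<in> set (P @ [(s,p),(c,\<not>p),(c,p),(s,\<not>p)] @ Q)"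
    then show "(a, \<not>b) \<in> set (P @ [(s,p),(c,\<not>p),(c,p),(s,\<not>p)] @ Q)"
      using wfw_flip_in[OF wf, of a b] by auto
  qed
  have s1: "sv_step (W, k) (W1, k1)"
    using sv_step.r1[where c=c and u="P @ [(s,p)]" and v="(s,\<not>p) # Q" and b="\<not>p" and k=k and ov=True] c
    unfolding W_def W1_def k1_def by simp
  define W2 where "W2 = P @ [(c,p),(s,\<not>p),(s,p),(c,\<not>p)] @ Q"
  have s2: "sv_step (W1, k1) (W2, k1)"
  proof -
    have "rot_ok k1 [(s,p),(c,\<not>p)] [(c,p),(s,\<not>p)]"
      unfolding rot_ok_def
      by (rule exI[of _ c], rule exI[of _ s], rule exI[of _ "\<not>p"], rule exI[of _ True]) (use cs ks in \<open>auto simp: k1_def\<close>)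
    from sv_step.rotv[OF this, where A=P and B="[]" and C=Q]
    show ?thesis unfolding W1_def W2_def by (simp add: flipl_def)
  qed
  have wf2: "wfw W2" by (rule mset_wfw[OF wf1]) (auto simp: W1_def W2_def)
  have k1s: "k1 s = Sg" "k1 c = Cl True" using ks cs by (auto simp: k1_def)
  have "homot (W2, k1) (P @ [(s,\<not>p),(s,p),(c,p),(c,\<not>p)] @ Q, k1)"
    using slide_gen[of P c p s "\<not>p" "[(c,\<not>p)] @ Q", OF _ k1s] wf2 unfolding W2_def by simp
  also have "homot ... (P @ [(s,\<not>p),(s,p)] @ Q, k)"
  proof (rule homot_sv')
    show "wfw (P @ [(s,\<not>p),(s,p)] @ Q)" by (rule mset_wfw[OF wf]) auto
    show "wfw (P @ [(s,\<not>p),(s,p),(c,p),(c,\<not>p)] @ Q)" by (rule mset_wfw[OF wf2]) (auto simp: W2_def)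
    show "sv_step (P @ [(s,\<not>p),(s,p)] @ Q, k) (P @ [(s,\<not>p),(s,p),(c,p),(c,\<not>p)] @ Q, k1)"
      using sv_step.r1[where c=c and u="P @ [(s,\<not>p),(s,p)]" and v="Q" and b="p" and k=k and ov=True] c
      unfolding W_def k1_def by simp
  qed
  finally have "homot (W2, k1) (P @ [(s,\<not>p),(s,p)] @ Q, k)" .
  moreover have "homot (W, k) (W2, k1)"
    using homot_sv[OF _ wf1 s1] homot_sv[OF wf1 wf2 s2] wf W_def homot_trans by blast
  ultimately show ?thesis unfolding W_def using homot_trans by blast
qed

lemma kink_front:
  assumes wf: "wfw (P @ [(s,p),(s,\<not>p)] @ Q)" and ks: "k s = Sg"
    and kP: "\<forall>l\<in>set P. \<exists>o'. k (fst l) = Cl o'"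
  shows "homot (P @ [(s,p),(s,\<not>p)] @ Q, k) ([(s,True),(s,False)] @ P @ Q, k)"
proof -
  have "homot (P @ [(s,p),(s,\<not>p)] @ Q, k) ([(s,p),(s,\<not>p)] @ P @ Q, k)"
    using slide_list[of "[]" P s p Q k] wf ks kP by simp
  also have "homot ... ([(s,True),(s,False)] @ P @ Q, k)"
  proof (cases p)
    case True then show ?thesis by auto
  next
    case False
    have "wfw ([] @ [(s,p),(s,\<not>p)] @ P @ Q)" by (rule mset_wfw[OF wf]) auto
    from kink_flip[of "[]" s p "P @ Q" k] this ks False show ?thesis by simp
  qed
  finally show ?thesis .
qed

lemma chords_map_flipl[simp]: "chords (map flipl X) = chords X"
  unfolding chords_def by (simp add: image_image flipl_def)

lemma sing_chords_simp: "sing_chords (w,k) = {c \<in> chords w. k c = Sg}"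
  by (simp add: sing_chords_def)

lemma sv_sing: "sv_step x y \<Longrightarrow> \<exists>g. inj_on g (sing_chords x) \<and> sing_chords y = g ` sing_chords x"
proof (induction rule: sv_step.induct)
  case (rot u v k) then show ?case by (intro exI[of _ id]) (auto simp: sing_chords_simp)
next
  case (ren f w k' k)
  have "chords (map (\<lambda>(c, b). (f c, b)) w) = f ` chords w"
    by (force simp: chords_def image_iff)
  then have "sing_chords (map (\<lambda>(c, b). (f c, b)) w, k') = f ` sing_chords (w, k)"
    using ren by (auto simp: sing_chords_simp image_iff)
  moreover have "inj_on f (sing_chords (w,k))" by (rule inj_on_subset[OF ren.hyps(1)]) (auto simp: sing_chords_simp)
  ultimately show ?case by blast
next
  case (r1 c u v k b ov) then show ?case by (intro exI[of _ id]) (auto simp: sing_chords_simp)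
next
  case (r2 c u v w d X b k ov) then show ?case by (intro exI[of _ id]) (auto simp: sing_chords_simp)
next
  case (r3 k X Y Z A B C D) then show ?case by (intro exI[of _ id]) (auto simp: sing_chords_simp)
next
  case (rotv k X Y A B C) then show ?case by (intro exI[of _ id]) (auto simp: sing_chords_simp)
qed

lemma cc_sing: "cc_step x y \<Longrightarrow> sing_chords y = sing_chords x"
  by (induction rule: cc_step.induct) (auto simp: sing_chords_simp)

lemma finite_sing[simp]: "finite (sing_chords d)"
  by (simp add: sing_chords_def)

lemma R_nsing: "R x y \<Longrightarrow> nsing y = nsing x"
proof -
  assume "R x y"
  then consider "sv_step x y" | "cc_step x y" by blast
  then show ?thesis
  proof cases
    case 1
    then obtain g where "inj_on g (sing_chords x)" "sing_chords y = g ` sing_chords x"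
      using sv_sing by blast
    then show ?thesis unfolding nsing_def by (simp add: card_image)
  next
    case 2 then show ?thesis using cc_sing nsing_def by simp
  qed
qed

lemma nsing_empty: "nsing d = 0 \<longleftrightarrow> sing_chords d = {}"
  unfolding nsing_def by simp

lemma equivclp_inv:
  assumes "equivclp r x y" "\<And>x y. r x y \<Longrightarrow> P x \<longleftrightarrow> P y" "\<And>x y. r x y \<Longrightarrow> P x \<Longrightarrow> P y \<Longrightarrow> f x = f y" "P x"
  shows "P y \<and> f x = f y"
  using assms(1) unfolding equivclp_def
proof (induction rule: rtranclp_induct)
  case base then show ?case using assms(4) by simp
next
  case (step y z)
  then have "r y z \<or> r z y" by (simp add: symclp_def)
  then show ?case using step assms(2,3) by metis
qed

lemma hclass_eq: "homot a b \<Longrightarrow> hclass a = hclass b"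
  unfolding hclass_def using homot_trans homot_sym by blast

lemma wfw_kink: "wfw w \<Longrightarrow> g \<notin> chords w \<Longrightarrow> wfw ((g,True) # (g,False) # w)"
  unfolding wfw_def by (auto dest: in_chords)

lemma sing0_ren:
  assumes wf: "wfw w" and g: "g \<notin> chords w"
  shows "homot (sing0 (w,k)) ((g,True) # (g,False) # w, k(g := Sg))"
proof -
  define f0 where "f0 = fresh w"
  have f0: "f0 \<notin> chords w" unfolding f0_def by (rule fresh_notin)
  define f :: "nat \<Rightarrow> nat" where "f = id(f0 := g)"
  have "map (\<lambda>(c, b). (f c, b)) w = w"
    using f0 by (auto intro!: map_idI simp: f_def dest: in_chords)
  then have m: "map (\<lambda>(c, b). (f c, b)) ((f0,True) # (f0,False) # w) = (g,True) # (g,False) # w"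
    by (simp add: f_def)
  have "sv_step ((f0,True) # (f0,False) # w, k(f0 := Sg)) ((g,True) # (g,False) # w, k(g := Sg))"
  proof -
    have i: "inj_on f (chords ((f0,True) # (f0,False) # w))"
      using f0 g by (auto simp: f_def inj_on_def)
    have k2: "\<forall>c\<in>chords ((f0,True) # (f0,False) # w). (k(g := Sg)) (f c) = (k(f0 := Sg)) c"
      using f0 g by (auto simp: f_def)
    from sv_step.ren[OF i k2] show ?thesis unfolding m .
  qed
  then show ?thesis unfolding sing0_def f0_def
    using homot_sv wfw_kink[OF wf f0[unfolded f0_def]] wfw_kink[OF wf g] by simp
qed

lemma sing0_lift:
  assumes wf: "wfw w" "wfw w'" and g: "g \<notin> chords w" "g \<notin> chords w'"
    and h: "homot ((g,True) # (g,False) # w, k(g := Sg)) ((g,True) # (g,False) # w', k'(g := Sg))"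
  shows "hclass (sing0 (w,k)) = hclass (sing0 (w',k'))"
proof -
  have "homot (sing0 (w,k)) (sing0 (w',k'))"
    using sing0_ren[OF wf(1) g(1), of k] h sing0_ren[OF wf(2) g(2), of k'] homot_trans homot_sym by blast
  then show ?thesis by (rule hclass_eq)
qed

lemma cc_sandwich:
  assumes "wfw W" "wfw W'" "j \<in> chords W" "j \<in> chords W'" "k j = Cl u"
    "sv_step (W, k(j := Cl v)) (W', k(j := Cl v))"
  shows "homot (W, k) (W', k)"
proof -
  have "homot (W, k) (W, k(j := Cl v))" using homot_cc assms by blast
  also have "homot ... (W', k(j := Cl v))" using homot_sv assms by blast
  also have "homot ... (W', k(j := Cl v, j := Cl u))" using homot_cc[of W' j "k(j := Cl v)" v u] assms by simp
  finally show ?thesis using assms(5) by (simp add: fun_upd_idem)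
qed

lemma not_Sg: "ck \<noteq> Sg \<Longrightarrow> \<exists>o'. ck = Cl o'"
  by (cases ck) auto

lemma vdiag_Cl: "sing_chords (w,k) = {} \<Longrightarrow> c \<in> chords w \<Longrightarrow> \<exists>o'. k c = Cl o'"
  by (intro not_Sg) (auto simp: sing_chords_simp)

lemma r2_glue_swap:
  assumes wf: "wfw (u @ [(c,b),(d,\<not>b)] @ v @ X @ w)"
    and X: "X \<in> {[(c, \<not> b), (d, b)], [(d, b), (c, \<not> b)]}"
  shows "homot (u @ [(c,b),(d,\<not>b)] @ v @ X @ w, K(c := Sg, d := Cl (\<not> ov)))
               (u @ [(c,b),(d,\<not>b)] @ v @ X @ w, K(c := Cl ov, d := Sg))"
proof -
  define W where "W = u @ [(c,b),(d,\<not>b)] @ v @ X @ w"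
  have dW: "distinct W" using wf W_def wfw_def by blast
  have cd: "c \<noteq> d" using dW X W_def by auto
  have nin: "\<forall>b'. (c,b') \<notin> set u \<and> (c,b') \<notin> set v \<and> (c,b') \<notin> set w \<and> (d,b') \<notin> set u \<and> (d,b') \<notin> set v \<and> (d,b') \<notin> set w"
  proof -
    have "(c,b) \<notin> set u" "(c,\<not>b) \<notin> set u" "(c,b) \<notin> set v" "(c,\<not>b) \<notin> set v" "(c,b) \<notin> set w" "(c,\<not>b) \<notin> set w"
      "(d,b) \<notin> set u" "(d,\<not>b) \<notin> set u" "(d,b) \<notin> set v" "(d,\<not>b) \<notin> set v" "(d,b) \<notin> set w" "(d,\<not>b) \<notin> set w"
      using dW X unfolding W_def by auto
    then show ?thesis by (metis notin_both)
  qed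
  define k1 where "k1 = K(c := Sg, d := Cl (\<not> ov))"
  define W2 where "W2 = u @ rev (map flipl [(c,b),(d,\<not>b)]) @ v @ rev (map flipl X) @ w"
  have s1: "sv_step (W, k1) (W2, k1)"
  proof -
    have "rot_ok k1 [(c,b),(d,\<not>b)] X"
      unfolding rot_ok_def
      by (rule exI[of _ d], rule exI[of _ c], rule exI[of _ "\<not>b"], rule exI[of _ "\<not>ov"])
         (use cd X in \<open>auto simp: k1_def\<close>)
    from sv_step.rotv[OF this, where A=u and B=v and C=w] show ?thesis unfolding W_def W2_def by simp
  qed
  have wf2: "wfw W2"
    by (rule mset_wfw[OF wf]) (use X in \<open>auto simp: W2_def flipl_def\<close>)
  define sw :: "nat \<Rightarrow> nat" where "sw = id(c := d, d := c)"
  define k2 where "k2 = K(c := Cl (\<not> ov), d := Sg)"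
  have s2: "sv_step (W2, k1) (W, k2)"
  proof -
    have mu: "\<And>L. (\<forall>b'. (c,b') \<notin> set L \<and> (d,b') \<notin> set L) \<Longrightarrow> map (\<lambda>(x, y). (sw x, y)) L = L"
      by (auto intro!: map_idI simp: sw_def)
    have mu3: "map (\<lambda>(x, y). (sw x, y)) u = u" "map (\<lambda>(x, y). (sw x, y)) v = v" "map (\<lambda>(x, y). (sw x, y)) w = w"
      using nin by (auto intro!: mu)
    have m: "map (\<lambda>(x, y). (sw x, y)) W2 = W"
      unfolding W2_def W_def apply (simp add: mu3) using X cd by (auto simp: sw_def flipl_def)
    have i: "inj_on sw (chords W2)" by (auto simp: sw_def inj_on_def)
    have kk: "\<forall>x\<in>chords W2. k2 (sw x) = k1 x" using cd by (auto simp: sw_def k1_def k2_def)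
    from sv_step.ren[OF i kk] show ?thesis unfolding m .
  qed
  have "homot (W, k1) (W2, k1)" using homot_sv[OF _ wf2 s1] wf W_def by simp
  also have "homot ... (W, k2)" using homot_sv[OF wf2 _ s2] wf W_def by simp
  also have "homot ... (W, k2(c := Cl ov))"
    by (rule homot_cc[of W c k2 "\<not> ov" ov]) (use wf in \<open>auto simp: W_def k2_def cd\<close>)
  finally show ?thesis using cd unfolding W_def k1_def k2_def by (simp add: fun_upd_twist)
qed

lemma r3_okI:
  assumes "distinct [a, b, c]"
    "X = (if o1 then [(a, s12), (b, \<not> s31)] else [(b, \<not> s31), (a, s12)])"
    "Y = (if o2 then [(a, \<not> s12), (c, s23)] else [(c, s23), (a, \<not> s12)])"
    "Z = (if o3 then [(b, s31), (c, \<not> s23)] else [(c, \<not> s23), (b, s31)])"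
    "((o1 = o3) = (s12 = s23))" "((o2 = o3) = (s31 \<noteq> s12))"
    "r3_kinds (k a) (k b) (k c) s12 s23 s31"
  shows "r3_ok k X Y Z"
  unfolding r3_ok_def using assms by blast

lemma r3_okE:
  assumes "r3_ok k X Y Z"
  obtains a b c s12 s23 s31 o1 o2 o3 where "distinct [a, b, c]"
    "X = (if o1 then [(a, s12), (b, \<not> s31)] else [(b, \<not> s31), (a, s12)])"
    "Y = (if o2 then [(a, \<not> s12), (c, s23)] else [(c, s23), (a, \<not> s12)])"
    "Z = (if o3 then [(b, s31), (c, \<not> s23)] else [(c, \<not> s23), (b, s31)])"
    "((o1 = o3) = (s12 = s23))" "((o2 = o3) = (s31 \<noteq> s12))"
    "r3_kinds (k a) (k b) (k c) s12 s23 s31"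
  using assms unfolding r3_ok_def by blast

lemma r3_ok_cong:
  assumes "r3_ok k X Y Z" "\<forall>c\<in>chords (X @ Y). k' c = k c"
  shows "r3_ok k' X Y Z"
proof -
  obtain a b c s12 s23 s31 o1 o2 o3 where h: "distinct [a, b, c]"
    "X = (if o1 then [(a, s12), (b, \<not> s31)] else [(b, \<not> s31), (a, s12)])"
    "Y = (if o2 then [(a, \<not> s12), (c, s23)] else [(c, s23), (a, \<not> s12)])"
    "Z = (if o3 then [(b, s31), (c, \<not> s23)] else [(c, \<not> s23), (b, s31)])"
    "((o1 = o3) = (s12 = s23))" "((o2 = o3) = (s31 \<noteq> s12))"
    "r3_kinds (k a) (k b) (k c) s12 s23 s31"
    by (rule r3_okE[OF assms(1)])
  have "k' a = k a" "k' b = k b" "k' c = k c" using assms(2) h(2,3) by (auto split: if_splits)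
  then show ?thesis using h by (intro r3_okI[of a b c X o1 s12 s31 Y o2 s23 Z o3]) auto
qed

lemma r3_glue:
  assumes r3: "r3_ok k X Y Z"
    and wf: "wfw (A @ X @ B @ Y @ C @ Z @ D)" "wfw (A @ rev X @ B @ rev Y @ C @ rev Z @ D)"
    and vd: "\<forall>c\<in>chords (A @ X @ B @ Y @ C @ Z @ D). \<exists>o'. k c = Cl o'"
    and x: "x \<in> chords (A @ X @ B @ Y @ C @ Z @ D)"
  shows "homot (A @ X @ B @ Y @ C @ Z @ D, k(x := Sg)) (A @ rev X @ B @ rev Y @ C @ rev Z @ D, k(x := Sg))"
proof -
  define W where "W = A @ X @ B @ Y @ C @ Z @ D"
  define W' where "W' = A @ rev X @ B @ rev Y @ C @ rev Z @ D"
  obtain a b c s12 s23 s31 o1 o2 o3 where h: "distinct [a, b, c]"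
    "X = (if o1 then [(a, s12), (b, \<not> s31)] else [(b, \<not> s31), (a, s12)])"
    "Y = (if o2 then [(a, \<not> s12), (c, s23)] else [(c, s23), (a, \<not> s12)])"
    "Z = (if o3 then [(b, s31), (c, \<not> s23)] else [(c, \<not> s23), (b, s31)])"
    "((o1 = o3) = (s12 = s23))" "((o2 = o3) = (s31 \<noteq> s12))"
    "r3_kinds (k a) (k b) (k c) s12 s23 s31"
    by (rule r3_okE[OF r3])
  have abc: "a \<in> chords W" "b \<in> chords W" "c \<in> chords W" "a \<in> chords W'" "b \<in> chords W'" "c \<in> chords W'"
    using h(2,3) unfolding W_def W'_def by (auto split: if_splits)
  obtain oa ob oc where ko: "k a = Cl oa" "k b = Cl ob" "k c = Cl oc"
    using vd abc unfolding W_def by metis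
  have wfW: "wfw W" "wfw W'" using wf W_def W'_def by auto
  have step: "\<And>K. r3_ok K X Y Z \<Longrightarrow> sv_step (W, K) (W', K)"
    unfolding W_def W'_def by (rule sv_step.r3)
  consider "x \<notin> {a,b,c}" | "x = a" | "x = b" | "x = c" by blast
  then have "homot (W, k(x := Sg)) (W', k(x := Sg))"
  proof cases
    case 1
    have "r3_ok (k(x := Sg)) X Y Z"
      by (rule r3_ok_cong[OF r3]) (use 1 h(2,3) in \<open>auto split: if_splits\<close>)
    then show ?thesis using homot_sv[OF wfW] step by blast
  next
    case 2
    define v where "v = (s31 = (\<not> (s23 = oc)))"
    have "r3_ok (k(x := Sg, b := Cl v)) X Y Z"
      by (rule r3_okI[OF h(1-6)]) (use 2 h(1) ko in \<open>auto simp: v_def\<close>)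
    then show ?thesis using cc_sandwich[OF wfW abc(2) abc(5), of "k(x := Sg)" ob v] step 2 h(1) ko by auto
  next
    case 3
    define v where "v = (s12 = (\<not> (s23 = oc)))"
    have "r3_ok (k(x := Sg, a := Cl v)) X Y Z"
      by (rule r3_okI[OF h(1-6)]) (use 3 h(1) ko in \<open>auto simp: v_def\<close>)
    then show ?thesis using cc_sandwich[OF wfW abc(1) abc(4), of "k(x := Sg)" oa v] step 3 h(1) ko by auto
  next
    case 4
    define v where "v = (s12 = (\<not> (s31 = ob)))"
    have "r3_ok (k(x := Sg, a := Cl v)) X Y Z"
      by (rule r3_okI[OF h(1-6)]) (use 4 h(1) ko in \<open>auto simp: v_def\<close>)
    then show ?thesis using cc_sandwich[OF wfW abc(1) abc(4), of "k(x := Sg)" oa v] step 4 h(1) ko by auto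
  qed
  then show ?thesis unfolding W_def W'_def .
qed

definition Gterm :: "gd \<Rightarrow> nat \<Rightarrow> gd set \<Rightarrow> int" where
  "Gterm d c h = sgn_ck (snd d c) * ((if h = hclass (glue d c) then 1 else 0) - (if h = hclass (sing0 d) then 1 else 0))"

lemma Gl_vd: "sing_chords (w,k) = {} \<Longrightarrow> Gl (w,k) h = (\<Sum>c\<in>chords w. Gterm (w,k) c h)"
proof -
  assume "sing_chords (w,k) = {}"
  then have "{c \<in> chords w. k c \<noteq> Sg} = chords w" by (auto simp: sing_chords_simp)
  then show ?thesis unfolding Gl_def Gterm_def by simp
qed

lemma glue_simp[simp]: "glue (w,k) c = (w, k(c := Sg))" by (simp add: glue_def)
lemma sing0_simp: "sing0 (w,k) = ((fresh w,True) # (fresh w,False) # w, k(fresh w := Sg))" by (simp add: sing0_def)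

lemma fresh_cong: "chords w = chords w' \<Longrightarrow> fresh w = fresh w'" by (simp add: fresh_def)

lemma Gl_cong:
  assumes "sing_chords (w,k) = {}" "sing_chords (w',k') = {}" "chords w = chords w'"
    "\<And>c. c \<in> chords w \<Longrightarrow> k' c = k c \<and> hclass (w, k(c := Sg)) = hclass (w', k'(c := Sg))"
    "hclass (sing0 (w,k)) = hclass (sing0 (w',k'))"
  shows "Gl (w,k) = Gl (w',k')"
proof
  fix h
  show "Gl (w,k) h = Gl (w',k') h"
    unfolding Gl_vd[OF assms(1)] Gl_vd[OF assms(2)] assms(3)[symmetric]
    by (rule sum.cong) (use assms(4,5) in \<open>auto simp: Gterm_def\<close>)
qed

lemma Gl_rot:
  assumes wf: "wfw (u @ v)" and vd: "sing_chords (u @ v, k) = {}"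
  shows "Gl (u @ v, k) = Gl (v @ u, k)"
proof (rule Gl_cong[OF vd])
  show "sing_chords (v @ u, k) = {}" using vd by (auto simp: sing_chords_simp)
  show "chords (u @ v) = chords (v @ u)" by auto
  show "k c = k c \<and> hclass (u @ v, k(c := Sg)) = hclass (v @ u, k(c := Sg))" for c
    using hclass_eq[OF homot_rot[OF wf]] by simp
  define f where "f = fresh (u @ v)"
  have f: "f \<notin> chords (u @ v)" unfolding f_def by (rule fresh_notin)
  have fe: "fresh (v @ u) = f" unfolding f_def by (rule fresh_cong) auto
  have "homot ([(f,True),(f,False)] @ v @ u, k(f := Sg)) (u @ [(f,True),(f,False)] @ v, k(f := Sg))"
  proof -
    have "wfw ((f,True) # (f,False) # v @ u)" by (rule mset_wfw[OF wfw_kink[OF wf f]]) auto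
    then show ?thesis using homot_rot[of "[(f,True),(f,False)] @ v" u "k(f := Sg)"] by simp
  qed
  also have "homot ... ([(f,True),(f,False)] @ u @ v, k(f := Sg))"
  proof -
    have "wfw (u @ [(f,True),(f,False)] @ v)"
      by (rule mset_wfw[OF wfw_kink[OF wf f]]) auto
    moreover have "\<forall>l\<in>set u. \<exists>o'. (k(f := Sg)) (fst l) = Cl o'"
      using vdiag_Cl[OF vd] f by (force dest: in_chords)
    ultimately show ?thesis using kink_front[of u f True v "k(f:=Sg)"] by simp
  qed
  finally have hh: "homot ([(f,True),(f,False)] @ v @ u, k(f := Sg)) ([(f,True),(f,False)] @ u @ v, k(f := Sg))" .
  have "fresh (u @ v) = f" by (simp add: f_def)
  then show "hclass (sing0 (u @ v, k)) = hclass (sing0 (v @ u, k))"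
    unfolding sing0_simp fe using hclass_eq[OF homot_sym[OF hh]] by simp
qed

lemma chords_map: "chords (map (\<lambda>(c, b). (f c, b)) w) = f ` chords w"
  by (force simp: chords_def image_iff)

lemma Gl_ren:
  assumes wf: "wfw w" "wfw (map (\<lambda>(c, b). (f c, b)) w)" and inj: "inj_on f (chords w)"
    and kk: "\<forall>c\<in>chords w. k' (f c) = k c" and vd: "sing_chords (w,k) = {}"
  shows "Gl (w,k) = Gl (map (\<lambda>(c, b). (f c, b)) w, k')"
proof
  fix h
  define w' where "w' = map (\<lambda>(c, b). (f c, b)) w"
  have cw': "chords w' = f ` chords w" unfolding w'_def by (rule chords_map)
  have vd': "sing_chords (w',k') = {}" using vd kk cw' by (auto simp: sing_chords_simp)
  define f0 where "f0 = fresh w"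
  define f1 where "f1 = fresh w'"
  have f0: "f0 \<notin> chords w" unfolding f0_def by (rule fresh_notin)
  have f1: "f1 \<notin> chords w'" unfolding f1_def by (rule fresh_notin)
  have S: "hclass (sing0 (w',k')) = hclass (sing0 (w,k))"
  proof -
    define g :: "nat \<Rightarrow> nat" where "g = f(f0 := f1)"
    have "map (\<lambda>(c, b). (g c, b)) w = w'"
      unfolding w'_def g_def using f0 by (auto intro!: map_cong dest: in_chords)
    then have m: "map (\<lambda>(c, b). (g c, b)) ((f0,True) # (f0,False) # w) = (f1,True) # (f1,False) # w'"
      by (simp add: g_def)
    have i: "inj_on g (chords ((f0,True) # (f0,False) # w))"
      using inj f0 f1 cw' unfolding g_def inj_on_def by (auto simp: image_iff)
    have k2: "\<forall>c\<in>chords ((f0,True) # (f0,False) # w). (k'(f1 := Sg)) (g c) = (k(f0 := Sg)) c"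
      using f0 f1 kk cw' by (auto simp: g_def)
    have "sv_step ((f0,True) # (f0,False) # w, k(f0 := Sg)) ((f1,True) # (f1,False) # w', k'(f1 := Sg))"
      using sv_step.ren[OF i k2] unfolding m .
    then have "sv_step (sing0 (w,k)) (sing0 (w',k'))"
      unfolding sing0_simp f0_def f1_def .
    then show ?thesis using homot_sv wfw_kink[OF wf(1) f0] wfw_kink[OF wf(2)[folded w'_def] f1]
      unfolding sing0_simp f0_def f1_def by (metis hclass_eq homot_sym)
  qed
  have T: "Gterm (w',k') (f c) h = Gterm (w,k) c h" if c: "c \<in> chords w" for c
  proof -
    have k2: "\<forall>x\<in>chords w. (k'(f c := Sg)) (f x) = (k(c := Sg)) x"
      using kk inj c by (auto simp: inj_on_def)
    from sv_step.ren[OF inj k2] have "homot (w, k(c := Sg)) (w', k'(f c := Sg))"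
      using homot_sv wf w'_def by blast
    then show ?thesis unfolding Gterm_def using S kk c hclass_eq by auto
  qed
  have "Gl (w',k') h = (\<Sum>c\<in>chords w. Gterm (w',k') (f c) h)"
    unfolding Gl_vd[OF vd'] cw' by (rule sum.reindex[OF inj, unfolded comp_def])
  also have "... = Gl (w,k) h" unfolding Gl_vd[OF vd] by (rule sum.cong) (auto simp: T)
  finally show "Gl (w,k) h = Gl (map (\<lambda>(c, b). (f c, b)) w, k') h" unfolding w'_def by simp
qed

lemma Gl_r1:
  assumes wf: "wfw (u @ v)" "wfw (u @ [(c,b),(c,\<not>b)] @ v)" and c: "c \<notin> chords (u @ v)"
    and vd: "sing_chords (u @ v, k) = {}"
  shows "Gl (u @ v, k) = Gl (u @ [(c,b),(c,\<not>b)] @ v, k(c := Cl ov))"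
proof
  fix h
  define W' where "W' = u @ [(c,b),(c,\<not>b)] @ v"
  define K' where "K' = k(c := Cl ov)"
  have vd': "sing_chords (W',K') = {}" using vd unfolding W'_def K'_def by (auto simp: sing_chords_simp)
  have cW: "chords W' = insert c (chords (u @ v))" unfolding W'_def by auto
  define g where "g = fresh W'"
  have g: "g \<notin> chords W'" unfolding g_def by (rule fresh_notin)
  have g2: "g \<notin> chords (u @ v)" "g \<noteq> c" using g cW by auto
  have S: "hclass (sing0 (u @ v, k)) = hclass (sing0 (W', K'))"
  proof (rule sing0_lift[OF wf(1) wf(2)[folded W'_def] g2(1) g])
    have "sv_step (((g,True) # (g,False) # u) @ v, k(g := Sg))
                  (((g,True) # (g,False) # u) @ [(c,b),(c,\<not>b)] @ v, k(g := Sg, c := Cl ov))"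
      by (rule sv_step.r1) (use c g2 in auto)
    moreover have "k(g := Sg, c := Cl ov) = K'(g := Sg)" unfolding K'_def using g2 by (auto simp: fun_eq_iff)
    ultimately show "homot ((g,True) # (g,False) # u @ v, k(g := Sg)) ((g,True) # (g,False) # W', K'(g := Sg))"
      using homot_sv wfw_kink[OF wf(1) g2(1)] wfw_kink[OF wf(2)[folded W'_def] g] unfolding W'_def by auto
  qed
  have Gc: "hclass (W', K'(c := Sg)) = hclass (sing0 (u @ v, k))"
  proof -
    have "\<forall>l\<in>set u. \<exists>o'. (k(c := Sg)) (fst l) = Cl o'"
      using vdiag_Cl[OF vd] c by (force dest: in_chords)
    then have "homot (W', k(c := Sg)) ([(c,True),(c,False)] @ u @ v, k(c := Sg))"
      using kink_front[of u c b v "k(c := Sg)"] wf(2) unfolding W'_def by simp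
    moreover have "homot (sing0 (u @ v, k)) ((c,True) # (c,False) # u @ v, k(c := Sg))"
      by (rule sing0_ren[OF wf(1) c])
    ultimately show ?thesis unfolding K'_def by (simp add: hclass_eq)
  qed
  have T: "Gterm (W',K') x h = Gterm (u @ v, k) x h" if x: "x \<in> chords (u @ v)" for x
  proof -
    have xc: "x \<noteq> c" using x c by auto
    have "sv_step (u @ v, k(x := Sg)) (W', k(x := Sg, c := Cl ov))"
      unfolding W'_def by (rule sv_step.r1) (use c in auto)
    moreover have "k(x := Sg, c := Cl ov) = K'(x := Sg)" unfolding K'_def using xc by (auto simp: fun_eq_iff)
    ultimately have "hclass (W', K'(x := Sg)) = hclass (u @ v, k(x := Sg))"
      using homot_sv[OF wf(1) wf(2)[folded W'_def]] hclass_eq by (metis homot_sym)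
    then show ?thesis unfolding Gterm_def using S xc K'_def by simp
  qed
  have T0: "Gterm (W',K') c h = 0" unfolding Gterm_def using Gc S by simp
  have "Gl (W',K') h = Gterm (W',K') c h + (\<Sum>x\<in>chords (u @ v). Gterm (W',K') x h)"
    unfolding Gl_vd[OF vd'] cW using c by (simp add: sum.insert)
  also have "... = Gl (u @ v, k) h" unfolding Gl_vd[OF vd] T0 by (simp add: T)
  finally show "Gl (u @ v, k) h = Gl (u @ [(c,b),(c,\<not>b)] @ v, k(c := Cl ov)) h"
    unfolding W'_def K'_def by simp
qed

lemma Gl_r2:
  assumes wf: "wfw (u @ v @ w)" "wfw (u @ [(c,b),(d,\<not>b)] @ v @ X @ w)"
    and c: "c \<notin> chords (u @ v @ w)" "d \<notin> chords (u @ v @ w)" "c \<noteq> d"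
    and X: "X \<in> {[(c, \<not> b), (d, b)], [(d, b), (c, \<not> b)]}"
    and vd: "sing_chords (u @ v @ w, k) = {}"
  shows "Gl (u @ v @ w, k) = Gl (u @ [(c,b),(d,\<not>b)] @ v @ X @ w, k(c := Cl ov, d := Cl (\<not> ov)))"
proof
  fix h
  define W' where "W' = u @ [(c,b),(d,\<not>b)] @ v @ X @ w"
  define K' where "K' = k(c := Cl ov, d := Cl (\<not> ov))"
  have vd': "sing_chords (W',K') = {}" using vd X unfolding W'_def K'_def by (auto simp: sing_chords_simp)
  have cW: "chords W' = insert c (insert d (chords (u @ v @ w)))" unfolding W'_def using X by auto
  define g where "g = fresh W'"
  have g: "g \<notin> chords W'" unfolding g_def by (rule fresh_notin)
  have g2: "g \<notin> chords (u @ v @ w)" "g \<noteq> c" "g \<noteq> d" using g cW by auto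
  have S: "hclass (sing0 (u @ v @ w, k)) = hclass (sing0 (W', K'))"
  proof (rule sing0_lift[OF wf(1) wf(2)[folded W'_def] g2(1) g])
    have "sv_step (((g,True) # (g,False) # u) @ v @ w, k(g := Sg))
                  (((g,True) # (g,False) # u) @ [(c,b),(d,\<not>b)] @ v @ X @ w, k(g := Sg, c := Cl ov, d := Cl (\<not> ov)))"
      by (rule sv_step.r2) (use c g2 X in auto)
    moreover have "k(g := Sg, c := Cl ov, d := Cl (\<not> ov)) = K'(g := Sg)" unfolding K'_def using g2 by (auto simp: fun_eq_iff)
    ultimately show "homot ((g,True) # (g,False) # u @ v @ w, k(g := Sg)) ((g,True) # (g,False) # W', K'(g := Sg))"
      using homot_sv wfw_kink[OF wf(1) g2(1)] wfw_kink[OF wf(2)[folded W'_def] g] unfolding W'_def by auto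
  qed
  have Gcd: "hclass (W', K'(c := Sg)) = hclass (W', K'(d := Sg))"
  proof -
    have "K'(c := Sg) = k(c := Sg, d := Cl (\<not> ov))" "K'(d := Sg) = k(c := Cl ov, d := Sg)"
      unfolding K'_def using c(3) by (auto simp: fun_eq_iff)
    then show ?thesis using r2_glue_swap[OF wf(2) X, of k ov] hclass_eq unfolding W'_def by simp
  qed
  have T: "Gterm (W',K') x h = Gterm (u @ v @ w, k) x h" if x: "x \<in> chords (u @ v @ w)" for x
  proof -
    have xc: "x \<noteq> c" "x \<noteq> d" using x c by auto
    have "sv_step (u @ v @ w, k(x := Sg)) (W', k(x := Sg, c := Cl ov, d := Cl (\<not> ov)))"
      unfolding W'_def by (rule sv_step.r2) (use c X in auto)
    moreover have "k(x := Sg, c := Cl ov, d := Cl (\<not> ov)) = K'(x := Sg)" unfolding K'_def using xc by (auto simp: fun_eq_iff)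
    ultimately have "hclass (W', K'(x := Sg)) = hclass (u @ v @ w, k(x := Sg))"
      using homot_sv[OF wf(1) wf(2)[folded W'_def]] hclass_eq by (metis homot_sym)
    then show ?thesis unfolding Gterm_def using S xc K'_def by simp
  qed
  have T0: "Gterm (W',K') c h + Gterm (W',K') d h = 0"
    unfolding Gterm_def using Gcd c(3) by (simp add: K'_def algebra_simps)
  have "Gl (W',K') h = Gterm (W',K') c h + (Gterm (W',K') d h + (\<Sum>x\<in>chords (u @ v @ w). Gterm (W',K') x h))"
    unfolding Gl_vd[OF vd'] cW using c by (simp add: sum.insert)
  also have "... = Gl (u @ v @ w, k) h" unfolding Gl_vd[OF vd] using T0 by (simp add: T)
  finally show "Gl (u @ v @ w, k) h = Gl (u @ [(c,b),(d,\<not>b)] @ v @ X @ w, k(c := Cl ov, d := Cl (\<not> ov))) h"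
    unfolding W'_def K'_def by simp
qed

lemma Gl_r3:
  assumes r3: "r3_ok k X Y Z"
    and wf: "wfw (A @ X @ B @ Y @ C @ Z @ D)" "wfw (A @ rev X @ B @ rev Y @ C @ rev Z @ D)"
    and vd: "sing_chords (A @ X @ B @ Y @ C @ Z @ D, k) = {}"
  shows "Gl (A @ X @ B @ Y @ C @ Z @ D, k) = Gl (A @ rev X @ B @ rev Y @ C @ rev Z @ D, k)"
proof (rule Gl_cong[OF vd])
  show "sing_chords (A @ rev X @ B @ rev Y @ C @ rev Z @ D, k) = {}" using vd by (auto simp: sing_chords_simp)
  show "chords (A @ X @ B @ Y @ C @ Z @ D) = chords (A @ rev X @ B @ rev Y @ C @ rev Z @ D)" by auto
  show "k c = k c \<and> hclass (A @ X @ B @ Y @ C @ Z @ D, k(c := Sg)) = hclass (A @ rev X @ B @ rev Y @ C @ rev Z @ D, k(c := Sg))"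
    if "c \<in> chords (A @ X @ B @ Y @ C @ Z @ D)" for c
    using r3_glue[OF r3 wf _ that] vdiag_Cl[OF vd] hclass_eq by blast
  define g where "g = fresh (A @ X @ B @ Y @ C @ Z @ D)"
  have g: "g \<notin> chords (A @ X @ B @ Y @ C @ Z @ D)" unfolding g_def by (rule fresh_notin)
  have g': "g \<notin> chords (A @ rev X @ B @ rev Y @ C @ rev Z @ D)" using g by auto
  show "hclass (sing0 (A @ X @ B @ Y @ C @ Z @ D, k)) = hclass (sing0 (A @ rev X @ B @ rev Y @ C @ rev Z @ D, k))"
  proof (rule sing0_lift[OF wf g g'])
    have "r3_ok (k(g := Sg)) X Y Z" by (rule r3_ok_cong[OF r3]) (use g in auto)
    from sv_step.r3[OF this, where A="(g,True) # (g,False) # A"]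
    show "homot ((g,True) # (g,False) # A @ X @ B @ Y @ C @ Z @ D, k(g := Sg)) ((g,True) # (g,False) # A @ rev X @ B @ rev Y @ C @ rev Z @ D, k(g := Sg))"
      using homot_sv wfw_kink[OF wf(1) g] wfw_kink[OF wf(2) g'] by auto
  qed
qed

lemma Gl_sv: "sv_step x y \<Longrightarrow> wf_gd x \<Longrightarrow> wf_gd y \<Longrightarrow> sing_chords x = {} \<Longrightarrow> Gl x = Gl y"
proof (induction rule: sv_step.induct)
  case (rot u v k) then show ?case using Gl_rot by simp
next
  case (ren f w k' k) then show ?case using Gl_ren by simp
next
  case (r1 c u v k b ov) then show ?case using Gl_r1 by simp
next
  case (r2 c u v w d X b k ov) then show ?case using Gl_r2 by simp
next
  case (r3 k X Y Z A B C D) then show ?case using Gl_r3 by simp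
next
  case (rotv k X Y A B C)
  then obtain c d e oc where "k d = Sg" "X \<in> {[(c, e), (d, \<not> e)], [(d, \<not> e), (c, e)]}"
    unfolding rot_ok_def by blast
  then show ?case using rotv.prems(3) by (auto simp: sing_chords_simp)
qed

lemma sv_sing_empty: "sv_step x y \<Longrightarrow> sing_chords x = {} \<longleftrightarrow> sing_chords y = {}"
  using sv_sing by fastforce

theorem vinv_Gl: "vinvariant Gl"
  unfolding vinvariant_def
proof (intro allI impI)
  fix d d' assume a: "is_vdiag d \<and> is_vdiag d' \<and> veq d d'"
  have "sing_chords d' = {} \<and> Gl d = Gl d'"
  proof (rule equivclp_inv[where P="\<lambda>x. sing_chords x = {}"])
    show "equivclp (\<lambda>x y. wf_gd x \<and> wf_gd y \<and> sv_step x y) d d'" using a veq_def by simp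
  qed (use a sv_sing_empty Gl_sv is_vdiag_def in auto)
  then show "Gl d = Gl d'" by blast
qed

lemma sum_fun_apply: "(\<Sum>x\<in>A. f x) h = (\<Sum>x\<in>A. f x h)"
  by (induction A rule: infinite_finite_induct) auto

definition res :: "gd \<Rightarrow> nat set \<Rightarrow> nat \<Rightarrow> ckind" where
  "res d S = (\<lambda>c. if c \<in> S then Cl False else if c \<in> sing_chords d then Cl True else snd d c)"

lemma Vext_res: "Vext V d = (\<Sum>S\<in>Pow (sing_chords d). (if even (card S) then id else uminus) (V (fst d, res d S)))"
  unfolding Vext_def res_def by simp

lemma Vext_apply: "Vext (V :: gd \<Rightarrow> gd set \<Rightarrow> int) d h =
   (\<Sum>S\<in>Pow (sing_chords d). (if even (card S) then 1 else -1) * V (fst d, res d S) h)"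
  unfolding Vext_res sum_fun_apply by (rule sum.cong) auto

lemma homot_kinds:
  assumes wf: "wfw w" and fin: "finite D" and sub: "D \<subseteq> chords w"
    and cl: "\<forall>c\<in>D. (\<exists>o1. k c = Cl o1) \<and> (\<exists>o2. k' c = Cl o2)"
    and eq: "\<forall>c. c \<notin> D \<longrightarrow> k c = k' c"
  shows "homot (w,k) (w,k')"
  using fin sub cl eq
proof (induction D arbitrary: k rule: finite_induct)
  case empty then have "k = k'" by auto
  then show ?case by auto
next
  case (insert x D)
  obtain o1 o2 where o: "k x = Cl o1" "k' x = Cl o2" using insert.prems by auto
  have "homot (w,k) (w, k(x := Cl o2))" using homot_cc[of w x k o1 o2] wf o(1) insert.prems by auto
  also have "homot ... (w,k')"
    by (rule insert.IH) (use insert.prems o insert.hyps in auto)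
  finally show ?case .
qed

lemma alt_sum_zero:
  fixes g :: "nat set \<Rightarrow> int"
  assumes fin: "finite P" and p: "p \<in> P" and g: "\<forall>T. T \<subseteq> P - {p} \<longrightarrow> g (insert p T) = g T"
  shows "(\<Sum>S\<in>Pow P. (if even (card S) then 1 else -1) * g S) = 0"
proof -
  define P' where "P' = P - {p}"
  have P: "P = insert p P'" "p \<notin> P'" "finite P'" using p fin unfolding P'_def by auto
  have "Pow P = Pow P' \<union> insert p ` Pow P'" unfolding P(1) by (rule Pow_insert)
  moreover have "Pow P' \<inter> insert p ` Pow P' = {}" using P(2) by auto
  ultimately have "(\<Sum>S\<in>Pow P. (if even (card S) then 1 else -1) * g S) =
      (\<Sum>S\<in>Pow P'. (if even (card S) then 1 else -1) * g S) + (\<Sum>S\<in>insert p ` Pow P'. (if even (card S) then 1 else -1) * g S)"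
    using P(3) by (simp add: sum.union_disjoint)
  also have "(\<Sum>S\<in>insert p ` Pow P'. (if even (card S) then 1 else -1) * g S) =
      (\<Sum>T\<in>Pow P'. (if even (card (insert p T)) then 1 else -1) * g (insert p T))"
  proof (rule sum.reindex[unfolded comp_def])
    show "inj_on (insert p) (Pow P')" using P(2) unfolding inj_on_def by (metis PowD insert_absorb insert_ident subset_iff)
  qed
  also have "... = (\<Sum>T\<in>Pow P'. - ((if even (card T) then 1 else -1) * g T))"
  proof (rule sum.cong)
    fix T assume T: "T \<in> Pow P'"
    then have "p \<notin> T" "finite T" using P(2,3) finite_subset by auto
    then show "(if even (card (insert p T)) then 1 else -1) * g (insert p T) = - ((if even (card T) then 1 else -1) * g T)"
      using g T unfolding P'_def by auto
  qed simp
  finally show ?thesis by (simp add: sum_negf)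
qed

lemma sing_res: "sing_chords (w, res (w,k) S) = {}"
  unfolding sing_chords_simp res_def by (auto simp: sing_chords_simp)

theorem Gl_le1: "vass_le Gl 1"
  unfolding vass_le_def
proof (intro allI impI)
  fix d :: gd assume a: "wf_gd d \<and> 1 < nsing d"
  obtain w k where d: "d = (w,k)" by (cases d)
  have wf: "wfw w" using a d by simp
  define P where "P = sing_chords (w,k)"
  have finP: "finite P" unfolding P_def by simp
  have cP: "2 \<le> card P" using a d unfolding nsing_def P_def by simp
  have Pw: "P \<subseteq> chords w" unfolding P_def sing_chords_simp by auto
  define A where "A c = hclass (w, (res (w,k) {})(c := Sg))" for c
  define B where "B = hclass (sing0 (w, res (w,k) {}))"
  have clres: "\<exists>o'. res (w,k) S c = Cl o'" if "c \<in> P" for S c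
    using that unfolding res_def P_def by auto
  have resout: "res (w,k) S c = k c" if "c \<notin> P" "S \<subseteq> P" for S c
    using that unfolding res_def P_def by auto
  have hA: "hclass (w, (res (w,k) S)(c := Sg)) = A c" if S: "S \<subseteq> P" for S c
    unfolding A_def
  proof (rule hclass_eq, rule homot_kinds[OF wf _ _ _, where D="P - {c}"])
    show "finite (P - {c})" using finP by simp
    show "P - {c} \<subseteq> chords w" using Pw by auto
  qed (use clres S resout in \<open>auto\<close>)
  have hB: "hclass (sing0 (w, res (w,k) S)) = B" if S: "S \<subseteq> P" for S
    unfolding B_def sing0_simp
  proof (rule hclass_eq, rule homot_kinds[OF wfw_kink[OF wf fresh_notin], where D=P])
    show "P \<subseteq> chords ((fresh w, True) # (fresh w, False) # w)" using Pw by auto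
    have "fresh w \<notin> P" using Pw fresh_notin by blast
    then show "\<forall>c\<in>P. (\<exists>o1. ((res (w,k) S)(fresh w := Sg)) c = Cl o1) \<and> (\<exists>o2. ((res (w,k) {})(fresh w := Sg)) c = Cl o2)"
      using clres by auto
  qed (use finP clres S resout in \<open>auto\<close>)
  have inner: "(\<Sum>S\<in>Pow P. (if even (card S) then 1 else -1) * sgn_ck (res (w,k) S c)) = 0" for c
  proof -
    obtain p where p: "p \<in> P" "p \<noteq> c"
    proof -
      have "\<not> P \<subseteq> {c}" using card_mono[of "{c}" P] cP by auto
      then show ?thesis using that by blast
    qed
    show ?thesis by (rule alt_sum_zero[OF finP p(1)]) (use p in \<open>auto simp: res_def\<close>)
  qed
  show "Vext Gl d = 0"
  proof
    fix h
    have "Vext Gl d h = (\<Sum>S\<in>Pow P. (if even (card S) then 1 else -1) *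
        (\<Sum>c\<in>chords w. sgn_ck (res (w,k) S c) * ((if h = A c then 1 else 0) - (if h = B then 1 else 0))))"
      unfolding Vext_apply d fst_conv P_def[symmetric]
    proof (rule sum.cong)
      fix S assume S: "S \<in> Pow P"
      show "(if even (card S) then 1 else -1) * Gl (w, res (w, k) S) h = (if even (card S) then 1 else -1) *
        (\<Sum>c\<in>chords w. sgn_ck (res (w,k) S c) * ((if h = A c then 1 else 0) - (if h = B then 1 else 0)))"
        unfolding Gl_vd[OF sing_res] Gterm_def using hA[of S] hB[of S] S by simp
    qed simp
    also have "... = (\<Sum>S\<in>Pow P. \<Sum>c\<in>chords w. (if even (card S) then 1 else -1) *
        (sgn_ck (res (w,k) S c) * ((if h = A c then 1 else 0) - (if h = B then 1 else 0))))"
      by (simp only: sum_distrib_left)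
    also have "... = (\<Sum>c\<in>chords w. \<Sum>S\<in>Pow P. (if even (card S) then 1 else -1) *
        (sgn_ck (res (w,k) S c) * ((if h = A c then 1 else 0) - (if h = B then 1 else 0))))"
      by (rule sum.swap)
    also have "... = (\<Sum>c\<in>chords w. ((if h = A c then 1 else 0) - (if h = B then 1 else 0)) *
        (\<Sum>S\<in>Pow P. (if even (card S) then 1 else -1) * sgn_ck (res (w,k) S c)))"
      by (simp only: sum_distrib_left mult_ac)
    also have "... = 0" by (simp add: inner)
    finally show "Vext Gl d h = 0 h" by simp
  qed
qed

fun csum :: "nat list \<Rightarrow> nat \<Rightarrow> nat" where
  "csum [] s = 0"
| "csum (x # xs) s = csum xs s + count_list xs s"

lemma count_list_append'[simp]: "count_list (xs @ ys) s = count_list xs s + count_list ys s"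
  by (induction xs) auto

lemma csum_append: "csum (A @ B) s = csum A s + csum B s + length A * count_list B s"
  by (induction A) auto

lemma swap_par: "even (csum (P @ [p,q] @ Q) s) = (even (csum (P @ [q,p] @ Q) s) = ((p = s) = (q = s)))"
  by (auto simp: csum_append)

lemma csum_map: "inj_on f (insert s (set xs)) \<Longrightarrow> csum (map f xs) (f s) = csum xs s"
proof (induction xs)
  case Nil then show ?case by simp
next
  case (Cons x xs)
  have c: "count_list (map f xs) (f s) = count_list xs s" using Cons.prems
  proof (induction xs)
    case (Cons y ys) then show ?case by (auto simp: inj_on_def)
  qed simp
  then show ?case using Cons by (auto simp: inj_on_def)
qed

lemma wfw_count: assumes wf: "wfw w" and s: "s \<in> chords w" shows "count_list (map fst w) s = 2"
proof -
  have d: "distinct w" using wf wfw_def by blast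
  have "count_list (map fst w) s = length (filter (\<lambda>l. fst l = s) w)"
    by (induction w) auto
  also have "set (filter (\<lambda>l. fst l = s) w) = {(s,True),(s,False)}"
    using s wfw_flip_in[OF wf] by (auto simp: chords_iff) (metis (full_types) prod.collapse)+
  then have "length (filter (\<lambda>l. fst l = s) w) = card {(s,True),(s,False)}"
    using distinct_card[of "filter (\<lambda>l. fst l = s) w"] d by simp
  finally show ?thesis by simp
qed

lemma in_chords_both: assumes wf: "wfw w" and c: "c \<in> chords w" shows "(c,b) \<in> set w"
proof -
  obtain b0 where "(c,b0) \<in> set w" using c chords_iff by blast
  then have "(c,b0) \<in> set w" "(c,\<not>b0) \<in> set w" using wfw_flip_in[OF wf] by auto
  then show ?thesis by (cases b; cases b0) auto
qed

lemma wfw_even: assumes wf: "wfw w" shows "even (length w)"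
proof -
  have d: "distinct w" using wf wfw_def by blast
  have "set w = chords w \<times> UNIV"
    using in_chords_both[OF wf] by (auto dest: in_chords)
  then have "length w = card (chords w) * 2" using distinct_card[OF d] by (simp add: card_cartesian_product)
  then show ?thesis by simp
qed

definition Pi :: "gd \<Rightarrow> bool" where
  "Pi d \<longleftrightarrow> (\<exists>s\<in>sing_chords d. odd (csum (map fst (fst d)) s))"

lemma par_rot:
  assumes wf: "wfw (u @ v)" and s: "s \<in> chords (u @ v)"
  shows "even (csum (map fst (u @ v)) s) = even (csum (map fst (v @ u)) s)"
proof -
  have c2: "count_list (map fst u) s + count_list (map fst v) s = 2" using wfw_count[OF wf s] by simp
  have ev: "even (length u + length v)" using wfw_even[OF wf] by simp
  have "even (length u * count_list (map fst v) s) = even (length v * count_list (map fst u) s)"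
  proof -
    consider "count_list (map fst u) s = 0 \<and> count_list (map fst v) s = 2"
      | "count_list (map fst u) s = 1 \<and> count_list (map fst v) s = 1"
      | "count_list (map fst u) s = 2 \<and> count_list (map fst v) s = 0" using c2 by linarith
    then show ?thesis using ev by cases auto
  qed
  then show ?thesis by (simp add: csum_append) blast
qed

lemma csum_notin: "s \<notin> set L \<Longrightarrow> csum L s = 0"
  by (induction L) auto

lemma count_notin: "s \<notin> set L \<Longrightarrow> count_list L s = 0"
  by (induction L) auto

lemma par_ins: "s \<notin> set L \<Longrightarrow> even (length L) \<Longrightarrow> even (csum (U @ L @ V) s) = even (csum (U @ V) s)"
  by (simp add: csum_append csum_notin count_notin)

lemma par3:
  assumes "((x1=s)=(x2=s)) = (((y1=s)=(y2=s)) = ((z1=s)=(z2=s)))"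
  shows "even (csum (A @ [x1,x2] @ B @ [y1,y2] @ C @ [z1,z2] @ D) s) = even (csum (A @ [x2,x1] @ B @ [y2,y1] @ C @ [z2,z1] @ D) s)"
proof -
  have 1: "even (csum (A @ [x1,x2] @ (B @ [y1,y2] @ C @ [z1,z2] @ D)) s) = (even (csum (A @ [x2,x1] @ (B @ [y1,y2] @ C @ [z1,z2] @ D)) s) = ((x1=s)=(x2=s)))"
    by (rule swap_par)
  have 2: "even (csum ((A @ [x2,x1] @ B) @ [y1,y2] @ (C @ [z1,z2] @ D)) s) = (even (csum ((A @ [x2,x1] @ B) @ [y2,y1] @ (C @ [z1,z2] @ D)) s) = ((y1=s)=(y2=s)))"
    by (rule swap_par)
  have 3: "even (csum ((A @ [x2,x1] @ B @ [y2,y1] @ C) @ [z1,z2] @ D) s) = (even (csum ((A @ [x2,x1] @ B @ [y2,y1] @ C) @ [z2,z1] @ D) s) = ((z1=s)=(z2=s)))"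
    by (rule swap_par)
  show ?thesis using 1 2 3 assms by simp blast
qed

lemma par2:
  assumes "((x1=s)=(x2=s)) = ((y1=s)=(y2=s))"
  shows "even (csum (A @ [x1,x2] @ B @ [y1,y2] @ C) s) = even (csum (A @ [x2,x1] @ B @ [y2,y1] @ C) s)"
proof -
  have 1: "even (csum (A @ [x1,x2] @ (B @ [y1,y2] @ C)) s) = (even (csum (A @ [x2,x1] @ (B @ [y1,y2] @ C)) s) = ((x1=s)=(x2=s)))"
    by (rule swap_par)
  have 2: "even (csum ((A @ [x2,x1] @ B) @ [y1,y2] @ C) s) = (even (csum ((A @ [x2,x1] @ B) @ [y2,y1] @ C) s) = ((y1=s)=(y2=s)))"
    by (rule swap_par)
  show ?thesis using 1 2 assms by simp blast
qed

lemma Pi_eq: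
  assumes "sing_chords y = g ` sing_chords x"
    "\<forall>s\<in>sing_chords x. even (csum (map fst (fst y)) (g s)) = even (csum (map fst (fst x)) s)"
  shows "Pi x = Pi y"
  using assms unfolding Pi_def by auto

lemma map_fst_ren: "map fst (map (\<lambda>(c, b). (f c, b)) w) = map f (map fst w)"
  by (induction w) auto

lemma Pi_sv: "sv_step x y \<Longrightarrow> wf_gd x \<Longrightarrow> wf_gd y \<Longrightarrow> Pi x = Pi y"
proof (induction rule: sv_step.induct)
  case (rot u v k)
  show ?case by (rule Pi_eq[where g=id]) (use rot par_rot in \<open>auto simp: sing_chords_simp\<close>)
next
  case (ren f w k' k)
  show ?case
  proof (rule Pi_eq[where g=f])
    show "sing_chords (map (\<lambda>(c, b). (f c, b)) w, k') = f ` sing_chords (w, k)"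
      using ren chords_map[of f w] by (auto simp: sing_chords_simp image_iff)
    show "\<forall>s\<in>sing_chords (w, k). even (csum (map fst (fst (map (\<lambda>(c, b). (f c, b)) w, k'))) (f s)) =
          even (csum (map fst (fst (w, k))) s)"
    proof
      fix s assume "s \<in> sing_chords (w,k)"
      then have "insert s (set (map fst w)) = chords w" by (auto simp: sing_chords_simp chords_def)
      then show "even (csum (map fst (fst (map (\<lambda>(c, b). (f c, b)) w, k'))) (f s)) = even (csum (map fst (fst (w, k))) s)"
        using csum_map[of f s "map fst w"] ren.hyps(1) by (simp only: fst_conv map_fst_ren)
    qed
  qed
next
  case (r1 c u v k b ov)
  show ?case
  proof (rule Pi_eq[where g=id])
    show "sing_chords (u @ [(c, b), (c, \<not> b)] @ v, k(c := Cl ov)) = id ` sing_chords (u @ v, k)"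
      using r1 by (auto simp: sing_chords_simp)
    show "\<forall>s\<in>sing_chords (u @ v, k). even (csum (map fst (fst (u @ [(c, b), (c, \<not> b)] @ v, k(c := Cl ov)))) (id s)) =
           even (csum (map fst (fst (u @ v, k))) s)"
    proof
      fix s assume s: "s \<in> sing_chords (u @ v, k)"
      then have sc: "s \<noteq> c" using r1.hyps by (auto simp: sing_chords_simp)
      show "even (csum (map fst (fst (u @ [(c, b), (c, \<not> b)] @ v, k(c := Cl ov)))) (id s)) =
           even (csum (map fst (fst (u @ v, k))) s)"
        using par_ins[of s "[c,c]" "map fst u" "map fst v"] sc by simp
    qed
  qed
next
  case (r2 c u v w d X b k ov)
  have mX: "map fst X = [c,d] \<or> map fst X = [d,c]" using r2.hyps by auto
  show ?case
  proof (rule Pi_eq[where g=id])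
    show "sing_chords (u @ [(c, b), (d, \<not> b)] @ v @ X @ w, k(c := Cl ov, d := Cl (\<not> ov))) = id ` sing_chords (u @ v @ w, k)"
      using r2 by (auto simp: sing_chords_simp)
    show "\<forall>s\<in>sing_chords (u @ v @ w, k). even (csum (map fst (fst (u @ [(c, b), (d, \<not> b)] @ v @ X @ w, k(c := Cl ov, d := Cl (\<not> ov))))) (id s)) =
           even (csum (map fst (fst (u @ v @ w, k))) s)"
    proof
      fix s assume s: "s \<in> sing_chords (u @ v @ w, k)"
      then have sc: "s \<noteq> c" "s \<noteq> d" using r2.hyps by (auto simp: sing_chords_simp)
      have e1: "even (csum (map fst u @ [c,d] @ (map fst v @ map fst X @ map fst w)) s) = even (csum (map fst u @ (map fst v @ map fst X @ map fst w)) s)"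
        by (rule par_ins) (use sc in auto)
      have e2: "even (csum ((map fst u @ map fst v) @ map fst X @ map fst w) s) = even (csum ((map fst u @ map fst v) @ map fst w) s)"
        by (rule par_ins) (use sc mX in auto)
      show "even (csum (map fst (fst (u @ [(c, b), (d, \<not> b)] @ v @ X @ w, k(c := Cl ov, d := Cl (\<not> ov))))) (id s)) =
           even (csum (map fst (fst (u @ v @ w, k))) s)" using e1 e2 by simp
    qed
  qed
next
  case (r3 k X Y Z A B C D)
  obtain a b c s12 s23 s31 o1 o2 o3 where h: "distinct [a, b, c]"
    "X = (if o1 then [(a, s12), (b, \<not> s31)] else [(b, \<not> s31), (a, s12)])"
    "Y = (if o2 then [(a, \<not> s12), (c, s23)] else [(c, s23), (a, \<not> s12)])"
    "Z = (if o3 then [(b, s31), (c, \<not> s23)] else [(c, \<not> s23), (b, s31)])"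
    "((o1 = o3) = (s12 = s23))" "((o2 = o3) = (s31 \<noteq> s12))"
    "r3_kinds (k a) (k b) (k c) s12 s23 s31"
    by (rule r3_okE[OF r3.hyps])
  obtain x1 x2 y1 y2 z1 z2 where xyz: "X = [x1,x2]" "Y = [y1,y2]" "Z = [z1,z2]" using h(2-4) by (auto split: if_splits)
  show ?case
  proof (rule Pi_eq[where g=id])
    show "sing_chords (A @ rev X @ B @ rev Y @ C @ rev Z @ D, k) = id ` sing_chords (A @ X @ B @ Y @ C @ Z @ D, k)"
      by (auto simp: sing_chords_simp)
    show "\<forall>s\<in>sing_chords (A @ X @ B @ Y @ C @ Z @ D, k). even (csum (map fst (fst (A @ rev X @ B @ rev Y @ C @ rev Z @ D, k))) (id s)) =
           even (csum (map fst (fst (A @ X @ B @ Y @ C @ Z @ D, k))) s)"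
    proof
      fix s
      have cond: "((fst x1=s)=(fst x2=s)) = (((fst y1=s)=(fst y2=s)) = ((fst z1=s)=(fst z2=s)))"
        using h(2-4) xyz by (auto split: if_splits)
      show "even (csum (map fst (fst (A @ rev X @ B @ rev Y @ C @ rev Z @ D, k))) (id s)) =
           even (csum (map fst (fst (A @ X @ B @ Y @ C @ Z @ D, k))) s)"
        using par3[OF cond, of "map fst A" "map fst B" "map fst C" "map fst D"] xyz by simp
    qed
  qed
next
  case (rotv k X Y A B C)
  obtain c d e oc where h: "X \<in> {[(c, e), (d, \<not> e)], [(d, \<not> e), (c, e)]}"
     "Y \<in> {[(c, \<not> e), (d, e)], [(d, e), (c, \<not> e)]}"
    using rotv.hyps unfolding rot_ok_def by blast
  obtain x1 x2 y1 y2 where xy: "X = [x1,x2]" "Y = [y1,y2]" using h by auto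
  show ?case
  proof (rule Pi_eq[where g=id])
    show "sing_chords (A @ rev (map flipl X) @ B @ rev (map flipl Y) @ C, k) = id ` sing_chords (A @ X @ B @ Y @ C, k)"
      by (auto simp: sing_chords_simp)
    show "\<forall>s\<in>sing_chords (A @ X @ B @ Y @ C, k). even (csum (map fst (fst (A @ rev (map flipl X) @ B @ rev (map flipl Y) @ C, k))) (id s)) =
           even (csum (map fst (fst (A @ X @ B @ Y @ C, k))) s)"
    proof
      fix s
      have cond: "((fst x1=s)=(fst x2=s)) = ((fst y1=s)=(fst y2=s))"
        using h xy by auto
      show "even (csum (map fst (fst (A @ rev (map flipl X) @ B @ rev (map flipl Y) @ C, k))) (id s)) =
           even (csum (map fst (fst (A @ X @ B @ Y @ C, k))) s)"
        using par2[OF cond, of "map fst A" "map fst B" "map fst C"] xy by (simp add: flipl_def)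
    qed
  qed
qed

lemma Pi_cc: "cc_step x y \<Longrightarrow> Pi x = Pi y"
proof -
  assume a: "cc_step x y"
  then have "fst x = fst y" by (cases rule: cc_step.cases) auto
  then show ?thesis using cc_sing[OF a] unfolding Pi_def by simp
qed

lemma homot_Pi: "homot x y \<Longrightarrow> Pi x = Pi y"
proof -
  assume "homot x y"
  then have "True \<and> Pi x = Pi y"
    unfolding homot_def by (rule equivclp_inv[where P="\<lambda>_. True"]) (use Pi_sv Pi_cc in auto)
  then show ?thesis by simp
qed

lemma hclass_eq_homot: "hclass a = hclass b \<Longrightarrow> homot a b"
  unfolding hclass_def using homot_refl by blast

lemma Pi_sing0:
  assumes vd: "sing_chords (w,k) = {}"
  shows "Pi (sing0 (w,k))"
proof -
  define f where "f = fresh w"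
  have f: "f \<notin> chords w" unfolding f_def by (rule fresh_notin)
  have s: "sing_chords (sing0 (w,k)) = {f}" using vd unfolding sing0_simp f_def[symmetric]
    by (auto simp: sing_chords_simp)
  have "f \<notin> set (map fst w)" using f by (simp add: chords_def)
  then have "csum (map fst (fst (sing0 (w,k)))) f = 1"
    unfolding sing0_simp f_def[symmetric] by (simp add: csum_notin count_notin)
  then show ?thesis unfolding Pi_def s by simp
qed

theorem Gl_not_le0: "\<not> vass_le Gl 0"
proof
  assume a: "vass_le Gl 0"
  define w0 :: "letter list" where "w0 = [(0,True),(1,True),(0,False),(1,False)]"
  define k0 :: "nat \<Rightarrow> ckind" where "k0 = (\<lambda>_. Cl True)(0 := Sg)"
  have wf: "wfw w0" unfolding w0_def wfw_def by auto
  have cw: "chords w0 = {0,1}" unfolding w0_def by auto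
  have sd: "sing_chords (w0,k0) = {0}" unfolding sing_chords_simp cw k0_def by auto
  have "Vext Gl (w0,k0) = 0" using a wf sd unfolding vass_le_def nsing_def by auto
  define h0 where "h0 = hclass (w0,k0)"
  define rp :: "nat \<Rightarrow> ckind" where "rp = (\<lambda>_. Cl True)"
  define rm where "rm = rp(0 := Cl False)"
  have r: "res (w0,k0) {} = rp" "res (w0,k0) {0} = rm" by (simp_all only: res_def sd) (auto simp: rp_def rm_def k0_def)
  have vp: "sing_chords (w0,rp) = {}" "sing_chords (w0,rm) = {}" by (auto simp: sing_chords_simp rp_def rm_def)
  have nS: "h0 \<noteq> hclass (sing0 (w0,r))" if "sing_chords (w0,r) = {}" for r
  proof
    assume "h0 = hclass (sing0 (w0, r))"
    then have "Pi (w0,k0) = Pi (sing0 (w0,r))" using homot_Pi hclass_eq_homot h0_def by metis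
    moreover have "\<not> Pi (w0,k0)" unfolding Pi_def sd w0_def by simp
    ultimately show False using Pi_sing0[OF that] by simp
  qed
  have G0: "Gterm (w0,r) 0 h0 = sgn_ck (r 0)" if "sing_chords (w0,r) = {}" "r(0 := Sg) = k0" for r
    unfolding Gterm_def using nS[OF that(1)] that(2) h0_def by simp
  have k1: "rp(1 := Sg) = rm(1 := Sg, 0 := Cl True)" unfolding rm_def rp_def by (auto simp: fun_eq_iff)
  have H1: "hclass (w0, rp(1 := Sg)) = hclass (w0, rm(1 := Sg))"
    unfolding k1 by (rule hclass_eq, rule homot_sym, rule homot_cc[OF wf]) (auto simp: cw rm_def)
  have G1: "Gterm (w0,rp) 1 h0 = Gterm (w0,rm) 1 h0"
    unfolding Gterm_def using H1 nS[OF vp(1)] nS[OF vp(2)] by (simp add: rp_def rm_def)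
  have "Vext Gl (w0,k0) h0 = Gl (w0,rp) h0 - Gl (w0,rm) h0"
  proof -
    have "Pow {0::nat} = {{}, {0}}" by auto
    then show ?thesis unfolding Vext_apply sd fst_conv by (simp add: r)
  qed
  also have "... = 2"
    unfolding Gl_vd[OF vp(1)] Gl_vd[OF vp(2)] cw using G0[OF vp(1)] G0[OF vp(2)] G1
    by (simp add: rp_def rm_def k0_def fun_eq_iff)
  finally show False using \<open>Vext Gl (w0,k0) = 0\<close> by simp
qed

lemma Vext1:
  assumes "sing_chords (w,k) = {s}"
  shows "Vext V (w,k) = V (w, k(s := Cl True)) - V (w, k(s := Cl False))"
proof -
  have P: "Pow {s} = {{}, {s}}" by auto
  have "res (w,k) {} = k(s := Cl True)" "res (w,k) {s} = k(s := Cl False)"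
    unfolding res_def assms by (auto simp: fun_eq_iff)
  then show ?thesis unfolding Vext_res assms P by simp
qed

lemma r3_kinds_res:
  "r3_kinds ka kb kc s12 s23 s31 \<Longrightarrow>
   r3_kinds (if ka = Sg then Cl b else ka) (if kb = Sg then Cl b else kb) (if kc = Sg then Cl b else kc) s12 s23 s31"
  by (cases ka; cases kb; cases kc) auto

lemma veq_r2_inst:
  assumes wf: "wfw (u @ v @ w)" "wfw (u @ [(c,b),(d,\<not>b)] @ v @ X @ w)"
    and X: "X \<in> {[(c, \<not> b), (d, b)], [(d, b), (c, \<not> b)]}"
  shows "veq (u @ v @ w, k) (u @ [(c,b),(d,\<not>b)] @ v @ X @ w, k(c := Cl ov, d := Cl (\<not> ov)))"
proof -
  have dW: "distinct (u @ [(c,b),(d,\<not>b)] @ v @ X @ w)" using wf(2) wfw_def by blast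
  have cd: "c \<noteq> d" using dW X by auto
  have "\<forall>b'. (c,b') \<notin> set u \<and> (c,b') \<notin> set v \<and> (c,b') \<notin> set w \<and> (d,b') \<notin> set u \<and> (d,b') \<notin> set v \<and> (d,b') \<notin> set w"
  proof -
    have "(c,b) \<notin> set u" "(c,\<not>b) \<notin> set u" "(c,b) \<notin> set v" "(c,\<not>b) \<notin> set v" "(c,b) \<notin> set w" "(c,\<not>b) \<notin> set w"
      "(d,b) \<notin> set u" "(d,\<not>b) \<notin> set u" "(d,b) \<notin> set v" "(d,\<not>b) \<notin> set v" "(d,b) \<notin> set w" "(d,\<not>b) \<notin> set w"
      using X dW by (elim insertE emptyE; simp)+
    then show ?thesis by (metis notin_both)
  qed
  then have "c \<notin> chords (u @ v @ w)" "d \<notin> chords (u @ v @ w)" by (auto simp: chords_iff)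
  then show ?thesis using veq_sv[OF wf] sv_step.r2 cd X by blast
qed

lemma rotv_res:
  assumes rot: "rot_ok k X Y" and wf: "wfw (A @ X @ B @ Y @ C)" "wfw (A @ rev (map flipl X) @ B @ rev (map flipl Y) @ C)"
    and sg: "sing_chords (A @ X @ B @ Y @ C, k) = {s}"
  shows "veq (A @ X @ B @ Y @ C, k(s := Cl b)) (A @ rev (map flipl X) @ B @ rev (map flipl Y) @ C, k(s := Cl b))"
proof -
  obtain c d e oc where h: "c \<noteq> d" "k c = Cl oc" "k d = Sg"
     "X \<in> {[(c, e), (d, \<not> e)], [(d, \<not> e), (c, e)]}" "Y \<in> {[(c, \<not> e), (d, e)], [(d, e), (c, \<not> e)]}"
    using rot unfolding rot_ok_def by blast
  have "d \<in> sing_chords (A @ X @ B @ Y @ C, k)" using h(3,4) by (auto simp: sing_chords_simp)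
  then have ds: "d = s" using sg by simp
  define W where "W = A @ X @ B @ Y @ C"
  define W' where "W' = A @ rev (map flipl X) @ B @ rev (map flipl Y) @ C"
  have dW: "distinct W" using wf W_def wfw_def by blast
  have nin: "\<forall>b'. (c,b') \<notin> set A \<and> (c,b') \<notin> set B \<and> (c,b') \<notin> set C \<and> (s,b') \<notin> set A \<and> (s,b') \<notin> set B \<and> (s,b') \<notin> set C"
  proof -
    have "(c,e) \<notin> set A" "(c,\<not>e) \<notin> set A" "(c,e) \<notin> set B" "(c,\<not>e) \<notin> set B" "(c,e) \<notin> set C" "(c,\<not>e) \<notin> set C"
      "(s,e) \<notin> set A" "(s,\<not>e) \<notin> set A" "(s,e) \<notin> set B" "(s,\<not>e) \<notin> set B" "(s,e) \<notin> set C" "(s,\<not>e) \<notin> set C"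
      using h(4,5) dW ds unfolding W_def by (elim insertE emptyE; simp)+
    then show ?thesis by (metis notin_both)
  qed
  show ?thesis
  proof (cases "oc = b")
    case True
    define sw :: "nat \<Rightarrow> nat" where "sw = id(c := s, s := c)"
    have mu: "\<And>L. (\<forall>b'. (c,b') \<notin> set L \<and> (s,b') \<notin> set L) \<Longrightarrow> map (\<lambda>(x, y). (sw x, y)) L = L"
      by (auto intro!: map_idI simp: sw_def)
    have mu3: "map (\<lambda>(x, y). (sw x, y)) A = A" "map (\<lambda>(x, y). (sw x, y)) B = B" "map (\<lambda>(x, y). (sw x, y)) C = C"
      using nin by (auto intro!: mu)
    have m: "map (\<lambda>(x, y). (sw x, y)) W = W'"
      unfolding W_def W'_def apply (simp add: mu3) using h(1,4,5) ds by (auto simp: sw_def flipl_def)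
    have i: "inj_on sw (chords W)" by (auto simp: sw_def inj_on_def)
    have kk: "\<forall>x\<in>chords W. (k(s := Cl b)) (sw x) = (k(s := Cl b)) x" proof -
      have cs: "c \<noteq> s" using h(1) ds by simp
      then show ?thesis using h(2) True by (auto simp: sw_def)
    qed
    from sv_step.ren[OF i kk] have "sv_step (W, k(s := Cl b)) (W', k(s := Cl b))" unfolding m .
    then show ?thesis using veq_sv wf W_def W'_def by simp
  next
    case False
    have k0: "k(s := Cl b, c := Cl oc, s := Cl b) = k(s := Cl b)" "k(s := Cl b, s := Cl b, c := Cl oc) = k(s := Cl b)"
      using h(1,2) ds by (auto simp: fun_eq_iff)
    have bo: "b = (\<not> oc)" using False by auto
    have wf0: "wfw (A @ B @ C)"
      unfolding wfw_def
    proof (intro conjI allI impI)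
      show "distinct (A @ B @ C)" using dW unfolding W_def by auto
      fix x y assume xy: "(x,y) \<in> set (A @ B @ C)"
      then have "(x, \<not>y) \<in> set W" using wfw_flip_in[OF wf(1), of x y] unfolding W_def by auto
      moreover have "x \<noteq> c" "x \<noteq> s" using xy nin by auto
      ultimately show "(x, \<not>y) \<in> set (A @ B @ C)" using h(4,5) ds unfolding W_def by auto
    qed
    have L: "veq (A @ B @ C, k(s := Cl b)) (W, k(s := Cl b))"
      using h(4)
    proof (elim insertE emptyE)
      assume X: "X = [(c, e), (d, \<not> e)]"
      note Y = h(5)
      show ?thesis using veq_r2_inst[where u=A and v=B and w=C and c=c and b=e and d=s and X=Y and k="k(s := Cl b)" and ov=oc, OF wf0] wf(1) X Y ds k0 bo by (simp add: W_def)
    next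
      assume X: "X = [(d, \<not> e), (c, e)]"
      note Y = h(5)
      show ?thesis using veq_r2_inst[where u=A and v=B and w=C and c=s and b="\<not>e" and d=c and X=Y and k="k(s := Cl b)" and ov=b, OF wf0] wf(1) X Y ds k0 bo by (auto simp: W_def)
    qed
    have R: "veq (A @ B @ C, k(s := Cl b)) (W', k(s := Cl b))"
      using h(4)
    proof (elim insertE emptyE)
      assume X: "X = [(c, e), (d, \<not> e)]"
      note Y = h(5)
      show ?thesis using veq_r2_inst[where u=A and v=B and w=C and c=s and b=e and d=c and X="rev (map flipl Y)" and k="k(s := Cl b)" and ov=b, OF wf0] wf(2) X Y ds k0 bo
        by (auto simp: flipl_def W'_def)
    next
      assume X: "X = [(d, \<not> e), (c, e)]"
      note Y = h(5)
      show ?thesis using veq_r2_inst[where u=A and v=B and w=C and c=c and b="\<not>e" and d=s and X="rev (map flipl Y)" and k="k(s := Cl b)" and ov=oc, OF wf0] wf(2) X Y ds k0 bo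
        by (auto simp: flipl_def W'_def)
    qed
    show ?thesis using veq_trans[OF veq_sym[OF L] R] unfolding W_def W'_def .
  qed
qed

lemma sv_res:
  "sv_step x y \<Longrightarrow> wf_gd x \<Longrightarrow> wf_gd y \<Longrightarrow> sing_chords x = {s} \<Longrightarrow>
   \<exists>s'. sing_chords y = {s'} \<and> (\<forall>b. veq (fst x, (snd x)(s := Cl b)) (fst y, (snd y)(s' := Cl b)))"
proof (induction rule: sv_step.induct)
  case (rot u v k)
  have "sing_chords (v @ u, k) = {s}" using rot.prems by (auto simp: sing_chords_simp)
  moreover have "veq (u @ v, k(s := Cl b)) (v @ u, k(s := Cl b))" for b
    using veq_sv[of "u @ v" "v @ u"] sv_step.rot rot.prems by auto
  ultimately show ?case by (intro exI[of _ s]) (simp add: fun_upd_def)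
next
  case (ren f w k' k)
  have sy: "sing_chords (map (\<lambda>(c, b). (f c, b)) w, k') = f ` sing_chords (w, k)"
    using ren.hyps chords_map[of f w] by (auto simp: sing_chords_simp image_iff)
  have sc: "s \<in> chords w" using ren.prems(3) by (auto simp: sing_chords_simp)
  have "veq (w, k(s := Cl b)) (map (\<lambda>(c, b). (f c, b)) w, k'(f s := Cl b))" for b
  proof -
    have kk: "\<forall>c\<in>chords w. (k'(f s := Cl b)) (f c) = (k(s := Cl b)) c"
      using ren.hyps sc by (auto simp: inj_on_def)
    have st: "sv_step (w, k(s := Cl b)) (map (\<lambda>(c, b). (f c, b)) w, k'(f s := Cl b))"
      by (rule sv_step.ren[OF ren.hyps(1) kk])
    show ?thesis using veq_sv[OF _ _ st] ren.prems by simp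
  qed
  then show ?case using sy ren.prems(3) by (intro exI[of _ "f s"]) (simp add: fun_upd_def)
next
  case (r1 c u v k b ov)
  have sc: "s \<noteq> c" using r1.hyps r1.prems(3) by (auto simp: sing_chords_simp)
  have "sing_chords (u @ [(c, b), (c, \<not> b)] @ v, k(c := Cl ov)) = {s}"
    using r1.prems(3) r1.hyps by (auto simp: sing_chords_simp)
  moreover have "veq (u @ v, k(s := Cl b')) (u @ [(c, b), (c, \<not> b)] @ v, k(c := Cl ov, s := Cl b'))" for b'
  proof -
    have "sv_step (u @ v, k(s := Cl b')) (u @ [(c, b), (c, \<not> b)] @ v, k(s := Cl b', c := Cl ov))"
      by (rule sv_step.r1) (use r1.hyps in simp)
    moreover have "k(s := Cl b', c := Cl ov) = k(c := Cl ov, s := Cl b')" using sc by (auto simp: fun_eq_iff)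
    ultimately show ?thesis using veq_sv r1.prems by auto
  qed
  ultimately show ?case by (intro exI[of _ s]) (simp add: fun_upd_def)
next
  case (r2 c u v w d X b k ov)
  have sc: "s \<noteq> c" "s \<noteq> d" using r2.hyps r2.prems(3) by (auto simp: sing_chords_simp)
  have cW: "chords (u @ [(c,b),(d,\<not>b)] @ v @ X @ w) = insert c (insert d (chords (u @ v @ w)))"
    using r2.hyps(4) by auto
  have "sing_chords (u @ [(c, b), (d, \<not> b)] @ v @ X @ w, k(c := Cl ov, d := Cl (\<not> ov))) = sing_chords (u @ v @ w, k)"
    unfolding sing_chords_simp cW using r2.hyps(1,2) by auto
  then have "sing_chords (u @ [(c, b), (d, \<not> b)] @ v @ X @ w, k(c := Cl ov, d := Cl (\<not> ov))) = {s}"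
    using r2.prems(3) by simp
  moreover have "veq (u @ v @ w, k(s := Cl b')) (u @ [(c, b), (d, \<not> b)] @ v @ X @ w, k(c := Cl ov, d := Cl (\<not> ov), s := Cl b'))" for b'
  proof -
    have "sv_step (u @ v @ w, k(s := Cl b')) (u @ [(c, b), (d, \<not> b)] @ v @ X @ w, k(s := Cl b', c := Cl ov, d := Cl (\<not> ov)))"
      by (rule sv_step.r2) (use r2.hyps in auto)
    moreover have "k(s := Cl b', c := Cl ov, d := Cl (\<not> ov)) = k(c := Cl ov, d := Cl (\<not> ov), s := Cl b')" using sc by (auto simp: fun_eq_iff)
    ultimately show ?thesis using veq_sv r2.prems by auto
  qed
  ultimately show ?case by (intro exI[of _ s]) (simp add: fun_upd_def)
next
  case (r3 k X Y Z A B C D)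
  have "sing_chords (A @ rev X @ B @ rev Y @ C @ rev Z @ D, k) = {s}" using r3.prems(3) by (auto simp: sing_chords_simp)
  moreover have "veq (A @ X @ B @ Y @ C @ Z @ D, k(s := Cl b)) (A @ rev X @ B @ rev Y @ C @ rev Z @ D, k(s := Cl b))" for b
  proof -
    obtain a bb c s12 s23 s31 o1 o2 o3 where h: "distinct [a, bb, c]"
      "X = (if o1 then [(a, s12), (bb, \<not> s31)] else [(bb, \<not> s31), (a, s12)])"
      "Y = (if o2 then [(a, \<not> s12), (c, s23)] else [(c, s23), (a, \<not> s12)])"
      "Z = (if o3 then [(bb, s31), (c, \<not> s23)] else [(c, \<not> s23), (bb, s31)])"
      "((o1 = o3) = (s12 = s23))" "((o2 = o3) = (s31 \<noteq> s12))"
      "r3_kinds (k a) (k bb) (k c) s12 s23 s31"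
      by (rule r3_okE[OF r3.hyps])
    have inch: "a \<in> chords (A @ X @ B @ Y @ C @ Z @ D)" "bb \<in> chords (A @ X @ B @ Y @ C @ Z @ D)" "c \<in> chords (A @ X @ B @ Y @ C @ Z @ D)"
      using h(2,3) by (auto split: if_splits)
    have rr: "(k(s := Cl b)) x = (if k x = Sg then Cl b else k x)" if "x \<in> chords (A @ X @ B @ Y @ C @ Z @ D)" for x
    proof -
      have "k x = Sg \<longleftrightarrow> x = s" using r3.prems(3) that by (auto simp: sing_chords_simp)
      then show ?thesis by auto
    qed
    have "r3_ok (k(s := Cl b)) X Y Z"
      by (rule r3_okI[OF h(1-6)]) (use r3_kinds_res[OF h(7), of b] rr inch in simp)
    then show ?thesis using veq_sv sv_step.r3 r3.prems by auto
  qed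
  ultimately show ?case by (intro exI[of _ s]) (simp add: fun_upd_def)
next
  case (rotv k X Y A B C)
  have "sing_chords (A @ rev (map flipl X) @ B @ rev (map flipl Y) @ C, k) = {s}"
    using rotv.prems(3) by (auto simp: sing_chords_simp)
  then show ?case using rotv_res[OF rotv.hyps] rotv.prems by (intro exI[of _ s]) (simp add: fun_upd_def)
qed

lemma zsmul_0[simp]: "zsmul 0 x = 0" by (simp add: zsmul_def)

lemma zsmul_Suc: "zsmul (n + 1) x = zsmul n x + x"
proof (cases "0 \<le> n")
  case True
  then have "nat (n + 1) = Suc (nat n)" by simp
  then show ?thesis using True by (simp add: zsmul_def)
next
  case False
  show ?thesis
  proof (cases "n = -1")
    case True then show ?thesis by (simp add: zsmul_def)
  next
    case F2: False
    then have "nat (- n) = Suc (nat (- (n + 1)))" using False by simp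
    then show ?thesis using False F2 by (simp add: zsmul_def algebra_simps)
  qed
qed

lemma zsmul_add: "zsmul (m + n) x = zsmul m x + zsmul n x"
proof (induction m rule: int_induct[where k=0])
  case base then show ?case by simp
next
  case (step1 i)
  have "zsmul (i + 1 + n) x = zsmul (i + n + 1) x" by (simp add: algebra_simps)
  also have "... = zsmul (i + n) x + x" by (rule zsmul_Suc)
  finally show ?case using step1 zsmul_Suc[of i x] by (simp add: algebra_simps)
next
  case (step2 i)
  have "zsmul (i - 1 + n + 1) x = zsmul (i - 1 + n) x + x" by (rule zsmul_Suc)
  moreover have "zsmul (i - 1 + 1) x = zsmul (i - 1) x + x" by (rule zsmul_Suc)
  ultimately show ?case using step2 by (simp add: algebra_simps)
qed

lemma zsmul_uminus: "zsmul (- n) x = - zsmul n x"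
  using zsmul_add[of n "-n" x] by (simp add: eq_neg_iff_add_eq_0 add.commute)

lemma zsmul_one: "zsmul 1 x = x" by (simp add: zsmul_def)

lemma zsmul_zero_right[simp]: "zsmul n (0::'a::ab_group_add) = 0" by (simp add: zsmul_def)

definition val :: "(gd \<Rightarrow> 'a::ab_group_add) \<Rightarrow> gd set \<Rightarrow> 'a" where
  "val V h = Vext V (SOME d. d \<in> h)"

lemma Vstar_fin:
  assumes "finite F" "{h. z h \<noteq> 0} \<subseteq> F"
  shows "Vstar V z = (\<Sum>h\<in>F. zsmul (z h) (val V h))"
  unfolding Vstar_def val_def
  by (rule sum.mono_neutral_left) (use assms in \<open>auto intro: finite_subset\<close>)

lemma Vstar_add:
  assumes "finite {h. z1 h \<noteq> 0}" "finite {h. z2 h \<noteq> 0}"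
  shows "Vstar V (\<lambda>h. z1 h + z2 h) = Vstar V z1 + Vstar V z2"
proof -
  define F where "F = {h. z1 h \<noteq> 0} \<union> {h. z2 h \<noteq> 0}"
  have f: "finite F" using assms F_def by simp
  have "Vstar V (\<lambda>h. z1 h + z2 h) = (\<Sum>h\<in>F. zsmul (z1 h + z2 h) (val V h))"
    by (rule Vstar_fin[OF f]) (auto simp: F_def)
  also have "... = (\<Sum>h\<in>F. zsmul (z1 h) (val V h)) + (\<Sum>h\<in>F. zsmul (z2 h) (val V h))"
    by (simp add: zsmul_add sum.distrib)
  also have "... = Vstar V z1 + Vstar V z2"
    using Vstar_fin[OF f, of z1 V] Vstar_fin[OF f, of z2 V] F_def by auto
  finally show ?thesis .
qed

lemma Vstar_zero: "Vstar V (\<lambda>h. 0) = 0" by (simp add: Vstar_def)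

lemma Vstar_two:
  "Vstar V (\<lambda>h. s * ((if h = g then 1 else 0) - (if h = S then 1 else 0))) = zsmul s (val V g) - zsmul s (val V S)"
proof (cases "g = S")
  case True then show ?thesis by (simp add: Vstar_zero)
next
  case False
  have "Vstar V (\<lambda>h. s * ((if h = g then 1 else 0) - (if h = S then 1 else 0))) =
     (\<Sum>h\<in>{g,S}. zsmul (s * ((if h = g then 1 else 0) - (if h = S then 1 else 0))) (val V h))"
    by (rule Vstar_fin) auto
  also have "... = zsmul s (val V g) - zsmul s (val V S)" using False by (simp add: zsmul_uminus)
  finally show ?thesis .
qed

lemma sing_res1: "sing_chords (w,k) = {s} \<Longrightarrow> sing_chords (w, k(s := Cl b)) = {}"
  by (auto simp: sing_chords_simp)

lemma Vext_R:
  assumes inv: "vinvariant V" and le1: "vass_le V 1" and r: "R x y" and n: "nsing x = 1"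
  shows "Vext V x = Vext V y"
proof -
  obtain s where sx: "sing_chords x = {s}" using n unfolding nsing_def by (auto simp: card_1_singleton_iff)
  obtain w k where x: "x = (w,k)" by (cases x)
  obtain w' k' where y: "y = (w',k')" by (cases y)
  consider "sv_step x y" | "cc_step x y" using r by blast
  then show ?thesis
  proof cases
    case 1
    obtain s' where s': "sing_chords y = {s'}" "\<And>b. veq (w, k(s := Cl b)) (w', k'(s' := Cl b))"
      using sv_res[OF 1 _ _ sx] r x y by auto
    have "V (w, k(s := Cl b)) = V (w', k'(s' := Cl b))" for b
      using inv s'(2)[of b] sing_res1[OF sx[unfolded x]] sing_res1[OF s'(1)[unfolded y]] r x y
      unfolding vinvariant_def is_vdiag_def by auto
    then show ?thesis using Vext1[OF sx[unfolded x], of V] Vext1[OF s'(1)[unfolded y], of V] x y by simp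
  next
    case 2
    then obtain c ov where cc: "w' = w" "k' = k(c := Cl (\<not> ov))" "c \<in> chords w" "k c = Cl ov"
      using x y by (auto elim: cc_step.cases)
    have "s \<in> sing_chords x" using sx by simp
    then have "k s = Sg" using x by (simp add: sing_chords_simp)
    then have cs: "c \<noteq> s" using cc(4) by auto
    have sy: "sing_chords (w, k') = {s}" using sx x cc cs by (auto simp: sing_chords_simp)
    define d2 where "d2 = (w, k(c := Sg))"
    have s2: "sing_chords d2 = {s, c}" using sx x cc(3) unfolding d2_def by (auto simp: sing_chords_simp)
    have "Vext V d2 = 0" using le1 r x s2 cs unfolding vass_le_def nsing_def d2_def by auto
    define KK where "KK y1 y2 = k(s := Cl y1, c := Cl y2)" for y1 y2
    have P: "Pow {s,c} = {{}, {s}, {c}, {s,c}}" by auto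
    have r1: "res d2 {} = KK True True" "res d2 {s} = KK False True" "res d2 {c} = KK True False" "res d2 {s,c} = KK False False"
      unfolding res_def s2 using cs by (auto simp: fun_eq_iff KK_def d2_def)
    have "Vext V d2 = V (w, KK True True) - V (w, KK False True) - V (w, KK True False) + V (w, KK False False)"
    proof -
      have fd: "fst d2 = w" by (simp add: d2_def)
      show ?thesis unfolding Vext_res s2 P fd using cs by (simp add: r1 algebra_simps)
    qed
    then have e: "V (w, KK True True) - V (w, KK False True) - V (w, KK True False) + V (w, KK False False) = 0"
      using \<open>Vext V d2 = 0\<close> by simp
    have kx: "k(s := Cl b) = KK b ov" for b unfolding KK_def using cc(4) cs by (auto simp: fun_eq_iff)
    have ky: "k'(s := Cl b) = KK b (\<not> ov)" for b unfolding KK_def cc(2) using cs by (auto simp: fun_eq_iff)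
    have ex: "Vext V x = V (w, KK True ov) - V (w, KK False ov)" using Vext1[OF sx[unfolded x]] x kx by simp
    have ey: "Vext V y = V (w, KK True (\<not> ov)) - V (w, KK False (\<not> ov))" using Vext1[OF sy] y cc(1) ky by simp
    have e': "V (w, KK True True) - V (w, KK False True) = V (w, KK True False) - V (w, KK False False)"
    proof -
      have "(V (w, KK True True) - V (w, KK False True)) - (V (w, KK True False) - V (w, KK False False)) = 0"
        using e by (simp add: algebra_simps)
      then show ?thesis by simp
    qed
    show ?thesis
    proof (cases ov)
      case True then show ?thesis using ex ey e' by simp
    next
      case False then show ?thesis using ex ey e' by simp
    qed
  qed
qed

lemma Vext_homot:
  assumes inv: "vinvariant V" and le1: "vass_le V 1" and h: "homot x y" and n: "nsing x = 1"
  shows "Vext V x = Vext V y"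
proof -
  have "nsing y = 1 \<and> Vext V x = Vext V y"
    using h unfolding homot_def
  proof (rule equivclp_inv[where P="\<lambda>x. nsing x = 1"])
    show "\<And>x y. R x y \<Longrightarrow> (nsing x = 1) = (nsing y = 1)" using R_nsing by metis
    show "\<And>x y. R x y \<Longrightarrow> nsing x = 1 \<Longrightarrow> nsing y = 1 \<Longrightarrow> Vext V x = Vext V y" using Vext_R[OF inv le1] by blast
  qed (rule n)
  then show ?thesis by simp
qed

lemma val_hclass:
  assumes inv: "vinvariant V" and le1: "vass_le V 1" and n: "nsing e = 1"
  shows "val V (hclass e) = Vext V e"
proof -
  have "e \<in> hclass e" by (simp add: hclass_def homot_refl)
  then have "(SOME d. d \<in> hclass e) \<in> hclass e" by (rule someI)
  then have "homot e (SOME d. d \<in> hclass e)" by (simp add: hclass_def)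
  then show ?thesis unfolding val_def using Vext_homot[OF inv le1 _ n] by metis
qed

lemma Gl_fin: "finite {h. Gl d h \<noteq> 0}"
proof (rule finite_subset)
  show "{h. Gl d h \<noteq> 0} \<subseteq> insert (hclass (sing0 d)) ((\<lambda>c. hclass (glue d c)) ` chords (fst d))"
  proof
    fix h assume "h \<in> {h. Gl d h \<noteq> 0}"
    then have g: "Gl d h \<noteq> 0" by simp
    show "h \<in> insert (hclass (sing0 d)) ((\<lambda>c. hclass (glue d c)) ` chords (fst d))"
    proof (rule ccontr)
      assume n: "h \<notin> insert (hclass (sing0 d)) ((\<lambda>c. hclass (glue d c)) ` chords (fst d))"
      then have h1: "h \<noteq> hclass (sing0 d)" and h2: "\<forall>c\<in>chords (fst d). h \<noteq> hclass (glue d c)"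
        by blast+
      have "Gl d h = 0" unfolding Gl_def using h1 h2 by (intro sum.neutral) simp
      then show False using g by simp
    qed
  qed
qed simp

lemma cc_Gl:
  assumes wf: "wfw w" and vd: "sing_chords (w,k) = {}" and c: "c \<in> chords w" and kc: "k c = Cl ov"
  shows "Gl (w, k(c := Cl (\<not> ov))) h - Gl (w,k) h = 2 * (sgn_ck (Cl (\<not> ov)) *
      ((if h = hclass (w, k(c := Sg)) then 1 else 0) - (if h = hclass (sing0 (w,k)) then 1 else 0)))"
proof -
  define k' where "k' = k(c := Cl (\<not> ov))"
  have vd': "sing_chords (w,k') = {}" using vd unfolding k'_def by (auto simp: sing_chords_simp)
  define f where "f = fresh w"
  have f: "f \<notin> chords w" unfolding f_def by (rule fresh_notin)
  have S: "hclass (sing0 (w,k')) = hclass (sing0 (w,k))"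
  proof -
    have "homot ((f,True) # (f,False) # w, k(f := Sg)) ((f,True) # (f,False) # w, k(f := Sg, c := Cl (\<not> ov)))"
      by (rule homot_cc[of "(f,True) # (f,False) # w" c "k(f := Sg)" ov "\<not> ov"]) (use c kc f wfw_kink[OF wf f] in auto)
    moreover have "k(f := Sg, c := Cl (\<not> ov)) = k'(f := Sg)" unfolding k'_def using c f by (auto simp: fun_eq_iff)
    ultimately show ?thesis unfolding sing0_simp f_def[symmetric] using hclass_eq homot_sym by metis
  qed
  have T: "Gterm (w,k') x h = Gterm (w,k) x h" if x: "x \<in> chords w" "x \<noteq> c" for x
  proof -
    have "homot (w, k(x := Sg)) (w, k(x := Sg, c := Cl (\<not> ov)))"
      by (rule homot_cc[OF wf]) (use c kc x in auto)
    moreover have "k(x := Sg, c := Cl (\<not> ov)) = k'(x := Sg)" unfolding k'_def using x by (auto simp: fun_eq_iff)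
    ultimately have "hclass (w, k'(x := Sg)) = hclass (w, k(x := Sg))" using hclass_eq homot_sym by metis
    then show ?thesis unfolding Gterm_def using S x k'_def by simp
  qed
  have Tc: "Gterm (w,k) c h = - Gterm (w,k') c h"
    unfolding Gterm_def using S kc by (simp add: k'_def)
  have "Gl (w,k') h = Gterm (w,k') c h + (\<Sum>x\<in>chords w - {c}. Gterm (w,k') x h)"
    unfolding Gl_vd[OF vd'] using c by (simp add: sum.remove)
  moreover have "Gl (w,k) h = Gterm (w,k) c h + (\<Sum>x\<in>chords w - {c}. Gterm (w,k) x h)"
    unfolding Gl_vd[OF vd] using c by (simp add: sum.remove)
  moreover have "(\<Sum>x\<in>chords w - {c}. Gterm (w,k') x h) = (\<Sum>x\<in>chords w - {c}. Gterm (w,k) x h)"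
    by (rule sum.cong) (auto simp: T)
  ultimately have "Gl (w,k') h - Gl (w,k) h = 2 * Gterm (w,k') c h" using Tc by simp
  then show ?thesis unfolding Gterm_def k'_def using S[unfolded k'_def] by simp
qed

lemma Vext_sing0_zero:
  assumes inv: "vinvariant V" and wf: "wfw w" and vd: "sing_chords (w,k) = {}"
  shows "Vext V (sing0 (w,k)) = 0"
proof -
  define f where "f = fresh w"
  have f: "f \<notin> chords w" unfolding f_def by (rule fresh_notin)
  have s: "sing_chords (sing0 (w,k)) = {f}" using vd f unfolding sing0_simp f_def[symmetric]
    by (auto simp: sing_chords_simp)
  have "V ((f,True) # (f,False) # w, k(f := Cl b)) = V (w,k)" for b
  proof -
    have "veq (w,k) ([] @ [(f,True),(f,\<not>True)] @ w, k(f := Cl b))"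
      by (rule veq_sv[OF wf]) (use wfw_kink[OF wf f] f sv_step.r1[of f "[]" w k True b] in auto)
    then have vq: "veq (w,k) ((f,True) # (f,False) # w, k(f := Cl b))" by simp
    have vd2: "sing_chords ((f,True) # (f,False) # w, k(f := Cl b)) = {}" using vd by (auto simp: sing_chords_simp)
    have "V (w,k) = V ((f,True) # (f,False) # w, k(f := Cl b))"
      using inv[unfolded vinvariant_def, rule_format, of "(w,k)" "((f,True) # (f,False) # w, k(f := Cl b))"]
        vq vd vd2 wf wfw_kink[OF wf f] by (simp add: is_vdiag_def)
    then show ?thesis by simp
  qed
  then show ?thesis using Vext1[OF s[unfolded sing0_simp f_def[symmetric]], of V] unfolding sing0_simp f_def[symmetric]
    by simp
qed

lemma D_fin: "finite {h. (Gl a h - Gl b h) div 2 \<noteq> 0}"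
proof (rule finite_subset[OF _ finite_UnI[OF Gl_fin[of a] Gl_fin[of b]]])
  show "{h. (Gl a h - Gl b h) div 2 \<noteq> 0} \<subseteq> {h. Gl a h \<noteq> 0} \<union> {h. Gl b h \<noteq> 0}" by auto
qed

lemma step_R:
  assumes inv: "vinvariant V" and le1: "vass_le V 1" and r: "R y z" and vy: "is_vdiag y"
  shows "is_vdiag z \<and> (\<forall>h. even (Gl z h - Gl y h)) \<and> V z = V y + Vstar V (\<lambda>h. (Gl z h - Gl y h) div 2)"
proof -
  have vz: "is_vdiag z" using R_nsing[OF r] vy r unfolding is_vdiag_def nsing_empty[symmetric] by simp
  consider "sv_step y z" | "cc_step y z" using r by blast
  then show ?thesis
  proof cases
    case 1
    have "Gl y = Gl z" using Gl_sv[OF 1] r vy is_vdiag_def by blast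
    moreover have "V y = V z"
    proof -
      have "veq y z" unfolding veq_def using r 1 by (intro r_into_equivclp) simp
      then show ?thesis using inv vy vz unfolding vinvariant_def by blast
    qed
    ultimately show ?thesis using vz by (simp add: Vstar_zero)
  next
    case 2
    obtain w k where y: "y = (w,k)" by (cases y)
    obtain c ov where cc: "z = (w, k(c := Cl (\<not> ov)))" "c \<in> chords w" "k c = Cl ov"
      using 2 y by (auto elim: cc_step.cases)
    have wf: "wfw w" using r y by simp
    have vd: "sing_chords (w,k) = {}" using vy y is_vdiag_def by simp
    define g where "g = hclass (w, k(c := Sg))"
    define S where "S = hclass (sing0 (w,k))"
    define sg where "sg = sgn_ck (Cl (\<not> ov))"
    have dG: "Gl z h - Gl y h = 2 * (sg * ((if h = g then 1 else 0) - (if h = S then 1 else 0)))" for h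
      using cc_Gl[OF wf vd cc(2,3), of h] cc(1) y g_def S_def sg_def by simp
    have n1: "nsing (w, k(c := Sg)) = 1"
    proof -
      have "sing_chords (w, k(c := Sg)) = {c}" using vd cc(2) by (auto simp: sing_chords_simp)
      then show ?thesis by (simp add: nsing_def)
    qed
    have vg: "val V g = Vext V (w, k(c := Sg))" unfolding g_def by (rule val_hclass[OF inv le1 n1])
    have n0: "nsing (sing0 (w,k)) = 1"
    proof -
      have "sing_chords (sing0 (w,k)) = {fresh w}" using vd fresh_notin[of w]
        unfolding sing0_simp by (auto simp: sing_chords_simp)
      then show ?thesis by (simp add: nsing_def)
    qed
    have vS: "val V S = 0" unfolding S_def val_hclass[OF inv le1 n0] by (rule Vext_sing0_zero[OF inv wf vd])
    have sgl: "sing_chords (w, k(c := Sg)) = {c}" using vd cc(2) by (auto simp: sing_chords_simp)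
    have ve: "Vext V (w, k(c := Sg)) = V (w, k(c := Cl True)) - V (w, k(c := Cl False))"
      using Vext1[OF sgl, of V] by simp
    have "V z = V y + zsmul sg (val V g)"
    proof (cases ov)
      case True
      then have "k(c := Cl True) = k" using cc(3) by (auto simp: fun_eq_iff)
      then show ?thesis using cc(1) y vg ve True by (simp add: sg_def zsmul_uminus zsmul_one algebra_simps)
    next
      case False
      then have "k(c := Cl False) = k" using cc(3) by (auto simp: fun_eq_iff)
      then show ?thesis using cc(1) y vg ve False by (simp add: sg_def zsmul_one algebra_simps)
    qed
    moreover have "Vstar V (\<lambda>h. (Gl z h - Gl y h) div 2) = zsmul sg (val V g)"
      unfolding dG using Vstar_two[of V sg g S] vS by simp
    ultimately show ?thesis using vz dG by simp
  qed
qed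

lemma step_sym:
  assumes inv: "vinvariant V" and le1: "vass_le V 1" and r: "symclp R y z" and vy: "is_vdiag y"
  shows "is_vdiag z \<and> (\<forall>h. even (Gl z h - Gl y h)) \<and> V z = V y + Vstar V (\<lambda>h. (Gl z h - Gl y h) div 2)"
proof -
  consider "R y z" | "R z y" using r by (auto simp: symclp_def)
  then show ?thesis
  proof cases
    case 1 then show ?thesis using step_R[OF inv le1 _ vy] by blast
  next
    case 2
    have vz: "is_vdiag z" using R_nsing[OF 2] vy 2 unfolding is_vdiag_def nsing_empty[symmetric] by simp
    have st: "(\<forall>h. even (Gl y h - Gl z h)) \<and> V y = V z + Vstar V (\<lambda>h. (Gl y h - Gl z h) div 2)"
      using step_R[OF inv le1 2 vz] by blast
    have ev: "\<forall>h. even (Gl z h - Gl y h)" using st by (metis dvd_minus_iff minus_diff_eq)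
    have "Vstar V (\<lambda>h. (Gl z h - Gl y h) div 2 + (Gl y h - Gl z h) div 2) =
          Vstar V (\<lambda>h. (Gl z h - Gl y h) div 2) + Vstar V (\<lambda>h. (Gl y h - Gl z h) div 2)"
      by (rule Vstar_add[OF D_fin D_fin])
    moreover have "(\<lambda>h. (Gl z h - Gl y h) div 2 + (Gl y h - Gl z h) div 2) = (\<lambda>h. 0)"
    proof
      fix h
      obtain m where e1: "Gl y h - Gl z h = 2 * m" using st by blast
      have e2: "Gl z h - Gl y h = 2 * (- m)" using e1 by simp
      show "(Gl z h - Gl y h) div 2 + (Gl y h - Gl z h) div 2 = 0" by (simp only: e1 e2) simp
    qed
    ultimately have "Vstar V (\<lambda>h. (Gl z h - Gl y h) div 2) = - Vstar V (\<lambda>h. (Gl y h - Gl z h) div 2)"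
      by (simp add: Vstar_zero eq_neg_iff_add_eq_0)
    then show ?thesis using vz ev st by (simp add: algebra_simps)
  qed
qed

lemma univ:
  assumes inv: "vinvariant V" and le1: "vass_le V 1" and v0: "is_vdiag K0" and h: "homot K0 K"
  shows "is_vdiag K \<and> (\<forall>h. even (Gl K h - Gl K0 h)) \<and> V K = V K0 + Vstar V (\<lambda>h. (Gl K h - Gl K0 h) div 2)"
  using h unfolding homot_def equivclp_def
proof (induction rule: rtranclp_induct)
  case base then show ?case using v0 by (simp add: Vstar_zero)
next
  case (step y z)
  have IH: "is_vdiag y" "\<forall>h. even (Gl y h - Gl K0 h)" "V y = V K0 + Vstar V (\<lambda>h. (Gl y h - Gl K0 h) div 2)"
    using step.IH by auto
  have st: "is_vdiag z" "\<forall>h. even (Gl z h - Gl y h)" "V z = V y + Vstar V (\<lambda>h. (Gl z h - Gl y h) div 2)"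
    using step_sym[OF inv le1 step.hyps(2) IH(1)] by auto
  have ev: "\<forall>h. even (Gl z h - Gl K0 h)"
  proof
    fix h
    have "Gl z h - Gl K0 h = (Gl z h - Gl y h) + (Gl y h - Gl K0 h)" by simp
    then show "even (Gl z h - Gl K0 h)" using IH(2) st(2) by (metis dvd_add)
  qed
  have split: "(\<lambda>h. (Gl z h - Gl K0 h) div 2) = (\<lambda>h. (Gl y h - Gl K0 h) div 2 + (Gl z h - Gl y h) div 2)"
  proof
    fix h
    obtain m1 where m1: "Gl y h - Gl K0 h = 2 * m1" using IH(2) by blast
    obtain m2 where m2: "Gl z h - Gl y h = 2 * m2" using st(2) by blast
    have "Gl z h - Gl K0 h = 2 * (m1 + m2)" using m1 m2 by simp
    then show "(Gl z h - Gl K0 h) div 2 = (Gl y h - Gl K0 h) div 2 + (Gl z h - Gl y h) div 2" by (simp only: m1 m2) simp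
  qed
  have "V z = V K0 + Vstar V (\<lambda>h. (Gl z h - Gl K0 h) div 2)"
    unfolding split Vstar_add[OF D_fin D_fin] using IH(3) st(3) by (simp add: algebra_simps)
  then show ?case using st(1) ev by simp
qed

theorem mainTheorem5:
  shows "vinvariant Gl \<and> vass_deg Gl 1 \<and>
    (\<forall>(V :: gd \<Rightarrow> 'a::ab_group_add) K K0.
       vinvariant V \<and> vass_deg V 1 \<and> is_vdiag K \<and> is_vdiag K0 \<and> homot K K0 \<longrightarrow>
       (\<forall>h. even (Gl K h - Gl K0 h)) \<and>
       V K = V K0 + Vstar V (\<lambda>h. (Gl K h - Gl K0 h) div 2))"
proof -
  have 1: "vinvariant Gl" by (rule vinv_Gl)
  have 2: "vass_deg Gl 1" unfolding vass_deg_def using Gl_le1 Gl_not_le0 by auto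
  have 3: "\<forall>(V :: gd \<Rightarrow> 'a::ab_group_add) K K0.
       vinvariant V \<and> vass_deg V 1 \<and> is_vdiag K \<and> is_vdiag K0 \<and> homot K K0 \<longrightarrow>
       (\<forall>h. even (Gl K h - Gl K0 h)) \<and>
       V K = V K0 + Vstar V (\<lambda>h. (Gl K h - Gl K0 h) div 2)"
  proof (intro allI impI)
    fix V :: "gd \<Rightarrow> 'a" and K K0
    assume a: "vinvariant V \<and> vass_deg V 1 \<and> is_vdiag K \<and> is_vdiag K0 \<and> homot K K0"
    then have le1: "vass_le V 1" by (simp add: vass_deg_def)
    have u: "is_vdiag K \<and> (\<forall>h. even (Gl K h - Gl K0 h)) \<and> V K = V K0 + Vstar V (\<lambda>h. (Gl K h - Gl K0 h) div 2)"
      using univ[OF _ le1, of K0 K] a homot_sym by blast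
    then show "(\<forall>h. even (Gl K h - Gl K0 h)) \<and> V K = V K0 + Vstar V (\<lambda>h. (Gl K h - Gl K0 h) div 2)" by blast
  qed
  show ?thesis using 1 2 3 by blast
qed

end
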